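(* Let $k\leq n/2$. Then the threshold language $T_{n,k}=\{ w \in \{0,1\}^n : |w|_1\geq k \}$ requires regular expressions of length $\mathrm{rpn}(T_{n,k}) \geq n k^{\Omega( \log k)}$.
   Context: $|w|_1$ is the number of ones in $w$. Regular expressions are built from $\epsilon$ and letters by union and concatenation (no $\emptyset$); $\mathrm{rpn}(L)$ is the minimum number of syntax-tree nodes of an expression describing $L$. Logarithms are base 2. *)

theory Defs
  imports Complex_Main
begin

text \<open>Star-free, emptyset-free regular expressions over the alphabet {0,1}
  (letter 1 is True, letter 0 is False), built from epsilon and letters by
  union and concatenation.\<close>

datatype rexp = Eps | Lit bool | Union rexp rexp | Concat rexp rexp

fun lang :: "rexp \<Rightarrow> bool list set" where
  "lang Eps = {[]}"
| "lang (Lit a) = {[a]}"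
| "lang (Union r s) = lang r \<union> lang s"
| "lang (Concat r s) = {u @ v | u v. u \<in> lang r \<and> v \<in> lang s}"

fun nodes :: "rexp \<Rightarrow> nat" where
  "nodes Eps = 1"
| "nodes (Lit a) = 1"
| "nodes (Union r s) = nodes r + nodes s + 1"
| "nodes (Concat r s) = nodes r + nodes s + 1"

definition rpn :: "bool list set \<Rightarrow> nat" where
  "rpn L = (LEAST m. \<exists>r. lang r = L \<and> nodes r = m)"

definition ones :: "bool list \<Rightarrow> nat" where
  "ones w = length (filter id w)"

definition threshold_lang :: "nat \<Rightarrow> nat \<Rightarrow> bool list set" where
  "threshold_lang n k = {w. length w = n \<and> ones w \<ge> k}"

end

theory Submission
  imports Defs "HOL-Library.Discrete_Functions"
begin

lemma vand_term:
  "(m choose i) * (n choose j) \<le> (m + n) choose (i + j)"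
proof -
  have "(m choose i) * (n choose (i + j - i)) \<le> (\<Sum>k\<le>i+j. (m choose k) * (n choose (i + j - k)))"
    by (rule member_le_sum) auto
  also have "\<dots> = (m + n) choose (i + j)" by (rule vandermonde)
  finally show ?thesis by simp
qed

lemma fm_nat:
  assumes "r \<le> a"
  shows "(a+b choose a) * (c+e choose c) * (a choose r) \<le> (a+b choose r) * ((a+b+c+e-r) choose (a+c-r))"
proof -
  have "(a+b choose a) * (a choose r) = (a+b choose r) * ((a+b-r) choose (a-r))"
    using choose_mult[of r a "a+b"] assms by simp
  moreover have "((a+b-r) choose (a-r)) * (c+e choose c) \<le> ((a+b-r)+(c+e)) choose ((a-r)+c)"
    by (rule vand_term)
  moreover have "(a+b-r)+(c+e) = a+b+c+e-r" "(a-r)+c = a+c-r" using assms by auto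
  ultimately have "(a+b choose a) * (a choose r) * (c+e choose c) \<le> (a+b choose r) * ((a+b+c+e-r) choose (a+c-r))"
    by (metis mult.assoc mult_le_mono2)
  then show ?thesis by (simp add: ac_simps)
qed

lemma absorb_comp: "real (n choose Suc k) * real (Suc k) = real (n choose k) * real (n - k)"
proof -
  have "(n - k) * (n choose k) = Suc k * (n choose Suc k)"
    using binomial_absorb_comp[of n k] binomial_absorption[of k n] by simp
  then show ?thesis by (metis mult.commute of_nat_mult)
qed

lemma fall_L:
  assumes "r \<le> d" "d \<le> L"
  shows "real ((L - r) choose (d - r)) * real L ^ r \<le> real (L choose d) * real d ^ r"
  using assms
proof (induction r)
  case 0 then show ?case by simp
next
  case (Suc r)
  have IH: "real ((L - r) choose (d - r)) * real L ^ r \<le> real (L choose d) * real d ^ r"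
    using Suc by simp
  have dr: "d - r = Suc (d - Suc r)" using Suc.prems by simp
  have Lr: "L - r = Suc (L - Suc r)" using Suc.prems by simp
  have key: "real ((L - Suc r) choose (d - Suc r)) * real (L - r) = real ((L - r) choose (d - r)) * real (d - r)"
  proof -
    have "Suc (L - Suc r) * ((L - Suc r) choose (d - Suc r)) = (Suc (L - Suc r) choose Suc (d - Suc r)) * Suc (d - Suc r)"
      by (rule Suc_times_binomial_eq)
    then show ?thesis using dr Lr by (metis mult.commute of_nat_mult)
  qed
  have pos: "real (L - r) > 0" using Suc.prems by simp
  have "real ((L - Suc r) choose (d - Suc r)) * real L ^ Suc r
      = real ((L - r) choose (d - r)) * (real (d - r) * real L / real (L - r)) * real L ^ r"
    using key pos by (simp add: field_simps)
  also have "\<dots> \<le> real ((L - r) choose (d - r)) * real d * real L ^ r"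
  proof -
    have "real (d - r) * real L \<le> real d * real (L - r)"
      using Suc.prems by (simp add: of_nat_diff algebra_simps mult_right_mono)
    then have "real (d - r) * real L / real (L - r) \<le> real d" using pos by (simp add: divide_le_eq)
    then show ?thesis by (intro mult_right_mono mult_left_mono) auto
  qed
  also have "\<dots> = real d * (real ((L - r) choose (d - r)) * real L ^ r)" by simp
  also have "\<dots> \<le> real d * (real (L choose d) * real d ^ r)" using IH by (intro mult_left_mono) auto
  also have "\<dots> = real (L choose d) * real d ^ Suc r" by simp
  finally show ?case .
qed

lemma fall_a:
  assumes "r \<le> a" "a \<le> l"
  shows "real (l choose r) \<le> real (a choose r) * (real l / real (a - r + 1)) ^ r"
  using assms
proof (induction r)
  case 0 then show ?case by simp
next
  case (Suc r)
  have IH: "real (l choose r) \<le> real (a choose r) * (real l / real (a - r + 1)) ^ r" using Suc by simp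
  have e1: "real (l choose Suc r) * real (Suc r) = real (l choose r) * real (l - r)" by (rule absorb_comp)
  have e2: "real (a choose Suc r) * real (Suc r) = real (a choose r) * real (a - r)" by (rule absorb_comp)
  have ar: "real (a - r) > 0" using Suc.prems by simp
  have q: "real (a - Suc r + 1) = real (a - r)" using Suc.prems by simp
  have "real (l choose Suc r) = real (l choose r) * real (l - r) / real (Suc r)"
    using e1 by (simp add: field_simps)
  also have "\<dots> \<le> real (a choose r) * (real l / real (a - r + 1)) ^ r * real (l - r) / real (Suc r)"
    using IH by (intro divide_right_mono mult_right_mono) auto
  also have "\<dots> \<le> real (a choose r) * (real l / real (a - r)) ^ r * real l / real (Suc r)"
  proof -
    have "(real l / real (a - r + 1)) ^ r \<le> (real l / real (a - r)) ^ r"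
      using ar by (intro power_mono divide_left_mono) auto
    moreover have "real (l - r) \<le> real l" by simp
    ultimately show ?thesis
      by (intro divide_right_mono mult_mono mult_left_mono) auto
  qed
  also have "\<dots> = (real (a choose r) * real (a - r) / real (Suc r)) * (real l / real (a - r)) ^ Suc r"
  proof -
    have gen: "\<And>X Y A S::real. A > 0 \<Longrightarrow> X * (Y / A) ^ r * Y / S = (X * A / S) * (Y / A) ^ Suc r"
      by (simp add: field_simps)
    show ?thesis using gen[OF ar] by blast
  qed
  also have "real (a choose r) * real (a - r) / real (Suc r) = real (a choose Suc r)"
    using e2 by (simp add: field_simps)
  finally show ?case using q by simp
qed


lemma ratio_id:
  assumes "u < b" "u < c"
  shows "real ((a+b) choose (a+Suc u)) * real ((c+e) choose (c - Suc u)) * (real (a+u+1) * real (e+u+1))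
       = real ((a+b) choose (a+u)) * real ((c+e) choose (c - u)) * (real (b-u) * real (c-u))"
proof -
  have e1: "real ((a+b) choose Suc (a+u)) * real (Suc (a+u)) = real ((a+b) choose (a+u)) * real ((a+b) - (a+u))"
    by (rule absorb_comp)
  obtain k where k: "c - u = Suc k" "k = c - Suc u" using assms by (metis Suc_diff_Suc)
  have e2: "real ((c+e) choose Suc k) * real (Suc k) = real ((c+e) choose k) * real ((c+e) - k)"
    by (rule absorb_comp)
  have x1: "(a+b) - (a+u) = b - u" by simp
  have x2: "(c+e) - k = e+u+1" using k assms by simp
  have s1: "a + Suc u = Suc (a+u)" by simp
  have r1: "real (Suc (a+u)) = real (a+u+1)" by simp
  define X where "X = real ((a+b) choose (a+u))"
  define X1 where "X1 = real ((a+b) choose Suc (a+u))"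
  define Y where "Y = real ((c+e) choose (c - u))"
  define Y1 where "Y1 = real ((c+e) choose (c - Suc u))"
  have E1: "X1 * real (a+u+1) = X * real (b-u)" using e1 x1 r1 by (simp add: X_def X1_def)
  have E2: "Y1 * real (e+u+1) = Y * real (c-u)" using e2 x2 k by (simp add: Y_def Y1_def)
  have "X1 * Y1 * (real (a+u+1) * real (e+u+1)) = (X1 * real (a+u+1)) * (Y1 * real (e+u+1))"
    by (simp add: ac_simps)
  also have "\<dots> = X * Y * (real (b-u) * real (c-u))" using E1 E2 by (simp add: ac_simps)
  finally show ?thesis by (simp add: X_def X1_def Y_def Y1_def s1)
qed

lemma key_real:
  fixes a b c e t u :: real
  assumes t: "t > 0" "t \<le> a" "t \<le> b" "t \<le> c" "t \<le> e" and u: "u \<ge> 0" "u + 1 \<le> t"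
    and ae: "a * e \<le> b * c"
  shows "(1 - 4 * (u+1) / t) * ((a+u+1) * (e+u+1)) \<le> (b-u) * (c-u)"
proof -
  define y where "y = (u+1)/t"
  have y0: "y \<ge> 0" "y \<le> 1" using t u by (auto simp: y_def divide_le_eq)
  have yt: "u + 1 = y * t" using t by (simp add: y_def)
  have b1: "b * (1 - y) \<le> b - u"
  proof -
    have "u \<le> y * t" using yt by simp
    also have "\<dots> \<le> y * b" using y0 t by (intro mult_left_mono) auto
    finally show ?thesis by (simp add: algebra_simps)
  qed
  have c1: "c * (1 - y) \<le> c - u"
  proof -
    have "u \<le> y * t" using yt by simp
    also have "\<dots> \<le> y * c" using y0 t by (intro mult_left_mono) auto
    finally show ?thesis by (simp add: algebra_simps)
  qed
  have a1: "a + u + 1 \<le> a * (1 + y)"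
  proof -
    have "u + 1 = y * t" by (rule yt)
    also have "\<dots> \<le> y * a" using y0 t by (intro mult_left_mono) auto
    finally show ?thesis by (simp add: algebra_simps)
  qed
  have e1: "e + u + 1 \<le> e * (1 + y)"
  proof -
    have "u + 1 = y * t" by (rule yt)
    also have "\<dots> \<le> y * e" using y0 t by (intro mult_left_mono) auto
    finally show ?thesis by (simp add: algebra_simps)
  qed
  have pos: "a > 0" "b > 0" "c > 0" "e > 0" using t by auto
  have bnn: "b * (1-y) \<ge> 0" "c * (1-y) \<ge> 0" using y0 pos by auto
  have bc: "(b * (1-y)) * (c * (1-y)) \<le> (b-u) * (c-u)"
    using b1 c1 bnn by (intro mult_mono) auto
  have "4 * (u+1) / t = 4 * y" by (simp add: y_def)
  then have goal: "(1 - 4 * (u+1) / t) = 1 - 4*y" by simp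
  show ?thesis
  proof (cases "1 - 4*y \<le> 0")
    case True
    have "(1 - 4*y) * ((a+u+1) * (e+u+1)) \<le> 0"
      using True pos u by (intro mult_nonpos_nonneg) auto
    also have "0 \<le> (b - u) * (c - u)"
      using bc pos y0 by (smt (verit) mult_nonneg_nonneg)
    finally show ?thesis using goal by simp
  next
    case False
    have "(1 - 4*y) * ((a+u+1) * (e+u+1)) \<le> (1 - 4*y) * ((a*(1+y)) * (e*(1+y)))"
      using False a1 e1 pos u by (intro mult_left_mono mult_mono) auto
    also have "\<dots> = (a*e) * ((1-4*y)*(1+y)^2)" by (simp add: power2_eq_square algebra_simps)
    also have "\<dots> \<le> (a*e) * ((1-y)^2)"
    proof -
      have "0 \<le> 8*(y*y) + 4*(y*(y*y))" using y0 by simp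
      then have "(1-4*y)*(1+y)^2 \<le> (1-y)^2"
        by (simp add: power2_eq_square algebra_simps)
      then show ?thesis using pos by (intro mult_left_mono) auto
    qed
    also have "\<dots> \<le> (b*c) * ((1-y)^2)" using ae by (intro mult_right_mono) auto
    also have "\<dots> = (b * (1-y)) * (c * (1-y))" by (simp add: power2_eq_square algebra_simps)
    also have "\<dots> \<le> (b-u)*(c-u)" by (rule bc)
    finally show ?thesis using goal by simp
  qed
qed



definition ff :: "nat \<Rightarrow> nat \<Rightarrow> nat \<Rightarrow> nat \<Rightarrow> nat \<Rightarrow> real" where
  "ff a b c e u = real ((a+b) choose (a+u)) * real ((c+e) choose (c - u))"

lemma chain:
  assumes t: "t \<le> a" "t \<le> b" "t \<le> c" "t \<le> e" "t > 0" and ae: "a * e \<le> b * c"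
    and u: "4 * u * (u+1) \<le> t"
  shows "ff a b c e u \<ge> ff a b c e 0 * (1 - 2 * real u * (real u + 1) / real t)"
  using u
proof (induction u)
  case 0 then show ?case by simp
next
  case (Suc u)
  have ub: "4 * u * (u+1) \<le> t" using Suc.prems by (auto simp: algebra_simps)
  have IH: "ff a b c e u \<ge> ff a b c e 0 * (1 - 2 * real u * (real u + 1) / real t)" using Suc.IH ub by simp
  have lt: "u + 1 < t"
  proof -
    have "u + 1 \<le> 4 * Suc u * (Suc u + 1)" by simp
    also have "\<dots> \<le> t" using Suc.prems by simp
    finally have "u + 1 \<le> t" .
    moreover have "u + 1 \<noteq> t"
    proof
      assume "u + 1 = t"
      then have "4 * Suc u * (Suc u + 1) \<le> u + 1" using Suc.prems by simp
      then show False by simp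
    qed
    ultimately show ?thesis by simp
  qed
  have ub2: "u < b" "u < c" using lt t by auto
  have rid: "ff a b c e (Suc u) * (real (a+u+1) * real (e+u+1)) = ff a b c e u * (real (b-u) * real (c-u))"
    using ratio_id[OF ub2, of a e] by (simp add: ff_def)
  have kr: "(1 - 4 * (real u+1) / real t) * ((real a+real u+1) * (real e+real u+1)) \<le> (real b-real u) * (real c-real u)"
  proof (rule key_real)
    show "real t > 0" "real t \<le> real a" "real t \<le> real b" "real t \<le> real c" "real t \<le> real e"
      using t by auto
    show "real u \<ge> 0" by simp
    show "real u + 1 \<le> real t" using lt by linarith
    have "real (a * e) \<le> real (b * c)" using ae by (simp only: of_nat_le_iff)
    then show "real a * real e \<le> real b * real c" by simp
  qed
  have den: "real (a+u+1) * real (e+u+1) > 0" by simp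
  have ffnn: "ff a b c e u \<ge> 0" by (simp add: ff_def)
  have step: "ff a b c e (Suc u) \<ge> ff a b c e u * (1 - 4 * (real u+1) / real t)"
  proof -
    have "ff a b c e u * (1 - 4 * (real u+1) / real t) * (real (a+u+1) * real (e+u+1))
        = ff a b c e u * ((1 - 4 * (real u+1) / real t) * ((real a+real u+1) * (real e+real u+1)))"
      by (simp add: ac_simps)
    also have "\<dots> \<le> ff a b c e u * ((real b-real u) * (real c-real u))"
      using kr ffnn by (intro mult_left_mono) auto
    also have "\<dots> = ff a b c e (Suc u) * (real (a+u+1) * real (e+u+1))"
      using rid ub2 by (simp add: of_nat_diff)
    finally show ?thesis using den by (simp add: mult_le_cancel_right)
  qed
  have nn1: "1 - 2 * real u * (real u + 1) / real t \<ge> 0"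
  proof -
    have "2*u*(u+1) \<le> 4*u*(u+1)" by simp
    then have "2*u*(u+1) \<le> t" using ub by linarith
    then have "real (2*u*(u+1)) \<le> real t" by (simp only: of_nat_le_iff)
    then have "2 * real u * (real u + 1) \<le> real t" by (simp add: algebra_simps)
    then show ?thesis using t by (simp add: divide_le_eq)
  qed
  have nn2: "1 - 4 * (real u+1) / real t \<ge> 0"
  proof -
    have "4*(u+1) \<le> 4 * Suc u * (Suc u + 1)" by simp
    then have "4*(u+1) \<le> t" using Suc.prems by linarith
    then have "real (4*(u+1)) \<le> real t" by (simp only: of_nat_le_iff)
    then have "4 * (real u+1) \<le> real t" by simp
    then show ?thesis using lt by (simp add: divide_le_eq)
  qed
  have f0: "ff a b c e 0 \<ge> 0" by (simp add: ff_def)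
  have "ff a b c e 0 * (1 - 2 * real (Suc u) * (real (Suc u) + 1) / real t)
      \<le> ff a b c e 0 * ((1 - 2 * real u * (real u + 1) / real t) * (1 - 4 * (real u+1) / real t))"
  proof (intro mult_left_mono f0)
    have "(1 - 2 * real u * (real u + 1) / real t) * (1 - 4 * (real u+1) / real t)
        = 1 - 2 * real (Suc u) * (real (Suc u) + 1) / real t + (2 * real u * (real u + 1) / real t) * (4 * (real u+1) / real t)"
      using t by (simp add: field_simps)
    moreover have "(2 * real u * (real u + 1) / real t) * (4 * (real u+1) / real t) \<ge> 0" by simp
    ultimately show "1 - 2 * real (Suc u) * (real (Suc u) + 1) / real t \<le> (1 - 2 * real u * (real u + 1) / real t) * (1 - 4 * (real u+1) / real t)"
      by linarith
  qed
  also have "\<dots> = (ff a b c e 0 * (1 - 2 * real u * (real u + 1) / real t)) * (1 - 4 * (real u+1) / real t)" by simp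
  also have "\<dots> \<le> ff a b c e u * (1 - 4 * (real u+1) / real t)"
    using IH nn2 by (intro mult_right_mono) auto
  also have "\<dots> \<le> ff a b c e (Suc u)" by (rule step)
  finally show ?case .
qed



lemma ac_fwd:
  assumes t: "t \<le> a" "t \<le> b" "t \<le> c" "t \<le> e" and ae: "a * e \<le> b * c"
    and s: "4 * s * (s+1) \<le> t"
  shows "real (s+1) * (real ((a+b) choose a) * real ((c+e) choose c)) \<le> 2 * real ((a+b+c+e) choose (a+c))"
proof (cases "t = 0")
  case True
  then have "s = 0" using s by simp
  have "((a+b) choose a) * ((c+e) choose c) \<le> (a+b+(c+e)) choose (a+c)" by (rule vand_term)
  then have "real ((a+b) choose a) * real ((c+e) choose c) \<le> real ((a+b+c+e) choose (a+c))"
    by (metis add.assoc of_nat_le_iff of_nat_mult)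
  then show ?thesis using \<open>s = 0\<close> by simp
next
  case False
  then have tp: "t > 0" by simp
  have sc: "s \<le> c"
  proof -
    have "s \<le> 4 * s * (s+1)" by simp
    then show ?thesis using s t by linarith
  qed
  have each: "ff a b c e u \<ge> ff a b c e 0 / 2" if "u \<le> s" for u
  proof -
    have "4 * u * (u+1) \<le> 4 * s * (s+1)" using that by (intro mult_mono) auto
    then have u4: "4 * u * (u+1) \<le> t" using s by linarith
    have "ff a b c e u \<ge> ff a b c e 0 * (1 - 2 * real u * (real u + 1) / real t)"
      by (rule chain[OF t tp ae u4])
    moreover have "1 - 2 * real u * (real u + 1) / real t \<ge> 1/2"
    proof -
      have "real (4 * u * (u+1)) \<le> real t" using u4 by linarith
      then have "4 * real u * (real u + 1) \<le> real t" by (simp add: algebra_simps)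
      then show ?thesis using tp by (simp add: divide_le_eq)
    qed
    moreover have "ff a b c e 0 \<ge> 0" by (simp add: ff_def)
    moreover have "ff a b c e 0 * (1 - 2 * real u * (real u + 1) / real t) \<ge> ff a b c e 0 * (1/2)"
      using calculation by (intro mult_left_mono) auto
    ultimately have "ff a b c e 0 * (1/2) \<le> ff a b c e u" by linarith
    then show ?thesis by simp
  qed
  have "real (s+1) * (ff a b c e 0 / 2) = (\<Sum>u\<le>s. ff a b c e 0 / 2)" by simp
  also have "\<dots> \<le> (\<Sum>u\<le>s. ff a b c e u)" by (rule sum_mono) (use each in auto)
  also have "\<dots> = (\<Sum>x\<in>(\<lambda>u. a+u) ` {..s}. real ((a+b) choose x) * real ((c+e) choose (a+c-x)))"
    by (subst sum.reindex) (auto simp: inj_on_def ff_def)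
  also have "\<dots> \<le> (\<Sum>x\<le>a+c. real ((a+b) choose x) * real ((c+e) choose (a+c-x)))"
    by (rule sum_mono2) (use sc in auto)
  also have "\<dots> = real (\<Sum>x\<le>a+c. ((a+b) choose x) * ((c+e) choose (a+c-x)))" by simp
  also have "(\<Sum>x\<le>a+c. ((a+b) choose x) * ((c+e) choose (a+c-x))) = (a+b+(c+e)) choose (a+c)"
    by (rule vandermonde)
  finally have "real (s+1) * (ff a b c e 0 / 2) \<le> real ((a+b+c+e) choose (a+c))" by (simp add: add.assoc)
  then show ?thesis by (simp add: ff_def)
qed

lemma ac:
  assumes t: "t \<le> a" "t \<le> b" "t \<le> c" "t \<le> e" and s: "4 * s * (s+1) \<le> t"
  shows "real (s+1) * (real ((a+b) choose a) * real ((c+e) choose c)) \<le> 2 * real ((a+b+c+e) choose (a+c))"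
proof (cases "a * e \<le> b * c")
  case True then show ?thesis using ac_fwd[OF t True s] by simp
next
  case False
  then have ae: "b * c \<le> a * e" by simp
  have "real (s+1) * (real ((b+a) choose b) * real ((e+c) choose e)) \<le> 2 * real ((b+a+e+c) choose (b+e))"
    using t s ae by (intro ac_fwd[of t]) (auto simp: mult.commute)
  moreover have "(b+a) choose b = (a+b) choose a"
  proof -
    have "(a+b) choose a = (a+b) choose (a+b-a)" by (rule binomial_symmetric) simp
    then show ?thesis by (simp add: add.commute)
  qed
  moreover have "(e+c) choose e = (c+e) choose c"
  proof -
    have "(c+e) choose c = (c+e) choose (c+e-c)" by (rule binomial_symmetric) simp
    then show ?thesis by (simp add: add.commute)
  qed
  moreover have "(b+a+e+c) choose (b+e) = (a+b+c+e) choose (a+c)"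
  proof -
    have "(a+b+c+e) choose (a+c) = (a+b+c+e) choose ((a+b+c+e) - (a+c))"
      by (rule binomial_symmetric) simp
    also have "(a+b+c+e) - (a+c) = b+e" by simp
    finally show ?thesis by (simp add: ac_simps)
  qed
  ultimately show ?thesis by simp
qed


definition G :: "nat \<Rightarrow> real" where
  "G m = 2 ^ (((floor_log m - 24)^2) div 48)"

definition gf :: "nat \<Rightarrow> nat \<Rightarrow> real" where
  "gf L d = (if min d (L - d) = 0 then 1 else real L * G (min d (L - d)) / real (min d (L - d)))"

lemma G_ge1: "G m \<ge> 1"
  by (simp add: G_def)

lemma G_pos: "G m > 0"
  by (simp add: G_def)

lemma G_mono: "m \<le> n \<Longrightarrow> G m \<le> G n"
proof -
  assume "m \<le> n"
  then have "floor_log m \<le> floor_log n" by (rule floor_log_le_iff)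
  then have "floor_log m - 24 \<le> floor_log n - 24" by simp
  then have "(floor_log m - 24)^2 \<le> (floor_log n - 24)^2" by (rule power_mono) simp
  then have "(floor_log m - 24)^2 div 48 \<le> (floor_log n - 24)^2 div 48" by (rule div_le_mono)
  then show ?thesis unfolding G_def by (rule power_increasing) simp
qed

lemma G_small: "floor_log m \<le> 30 \<Longrightarrow> G m = 1"
proof -
  assume a: "floor_log m \<le> 30"
  have "floor_log m - 24 \<le> 6" using a by simp
  then have "(floor_log m - 24)^2 \<le> 6^2" by (rule power_mono) simp
  then have "(floor_log m - 24)^2 div 48 = 0" by simp
  then show ?thesis by (simp add: G_def)
qed

lemma pow_big_aux: "40 * ((n+31)^2 + 2) \<le> (2::nat)^(n+29)"
proof (induction n)
  case 0 then show ?case by simp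
next
  case (Suc n)
  have "40 * ((Suc n + 31)^2 + 2) \<le> 2 * (40 * ((n+31)^2 + 2))"
    by (simp add: power2_eq_square algebra_simps)
  also have "\<dots> \<le> 2 * 2^(n+29)" using Suc.IH by simp
  also have "\<dots> = 2^(Suc n + 29)" by (simp add: power_add)
  finally show ?case .
qed

lemma pow_big: "n \<ge> 31 \<Longrightarrow> 40 * (n^2 + 2) \<le> (2::nat)^(n-2)"
  using pow_big_aux[of "n - 31"] by simp


lemma G_big: "G d > 1 \<Longrightarrow> floor_log d \<ge> 31"
  using G_small[of d] by force

lemma G_le_pow: "G d \<le> 2 ^ ((floor_log d)^2)"
proof -
  have "(floor_log d - 24)^2 \<le> (floor_log d)^2" by (rule power_mono) simp_all
  then have "(floor_log d - 24)^2 div 48 \<le> (floor_log d)^2"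
    using div_le_dividend le_trans by blast
  then show ?thesis unfolding G_def by (rule power_increasing) simp
qed

lemma decay:
  assumes "G d > 1" "d \<le> 4 * a"
  shows "(5/6::real)^(a div 10) * G d \<le> 1/2"
proof -
  define l where "l = floor_log d"
  have l31: "l \<ge> 31" using G_big assms(1) l_def by simp
  have dpos: "d > 0"
  proof (rule ccontr)
    assume "\<not> d > 0"
    then have "d = 0" by simp
    then show False using l31 l_def by simp
  qed
  have "2^l \<le> d" using floor_log_exp2_le[OF dpos] l_def by simp
  also have "\<dots> \<le> 4 * a" by (rule assms(2))
  finally have "4 * 2^(l-2) \<le> 4 * a"
  proof -
    assume h: "2^l \<le> 4 * a"
    have "(2::nat)^l = 4 * 2^(l-2)"
    proof -
      have "l = Suc (Suc (l-2))" using l31 by simp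
      then have "(2::nat)^l = 2^(Suc (Suc (l-2)))" by simp
      also have "\<dots> = 4 * 2^(l-2)" by simp
      finally show ?thesis .
    qed
    then show ?thesis using h by simp
  qed
  then have a2: "2^(l-2) \<le> a" by simp
  have "40 * (l^2 + 2) \<le> a" using pow_big[OF l31] a2 by linarith
  then have q: "l^2 + 1 \<le> a div 40" by (simp add: less_eq_div_iff_mult_less_eq)
  have "(a div 10) div 4 = a div 40" by (simp add: div_mult2_eq)
  then have q4: "4 * (a div 40) \<le> a div 10" by (metis times_div_less_eq_dividend)
  have "(5/6::real)^(a div 10) \<le> (5/6)^(4 * (a div 40))"
    using q4 by (rule power_decreasing) simp_all
  also have "\<dots> = ((5/6)^4)^(a div 40)" by (simp add: power_mult)
  also have "\<dots> \<le> (1/2)^(a div 40)"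
  proof (rule power_mono)
    show "(5/6::real)^4 \<le> 1/2" by (simp add: power_divide)
  qed simp
  also have "\<dots> \<le> (1/2)^(l^2 + 1)" using q by (rule power_decreasing) simp_all
  finally have h1: "(5/6::real)^(a div 10) \<le> (1/2)^(l^2 + 1)" .
  have "(5/6::real)^(a div 10) * G d \<le> (1/2)^(l^2 + 1) * 2^(l^2)"
    using h1 G_le_pow[of d] l_def G_pos[of d] by (intro mult_mono) auto
  also have "\<dots> = 1/2" by (simp add: power_add power_one_over)
  finally show ?thesis .
qed

lemma div_add_le: "(A + B) div (m::nat) \<le> A div m + B div m + 1"
proof (cases "m = 0")
  case True then show ?thesis by simp
next
  case False
  have "(A + B) div m = A div m + B div m + (A mod m + B mod m) div m" by (rule div_add1_eq)
  moreover have "A mod m + B mod m < 2 * m"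
  proof -
    have "A mod m < m" "B mod m < m" using False by simp_all
    then show ?thesis by linarith
  qed
  then have "(A mod m + B mod m) div m < 2"
    by (intro less_mult_imp_div_less) simp
  then have "(A mod m + B mod m) div m \<le> 1" by simp
  ultimately show ?thesis by linarith
qed

lemma sq_shift: "(x::nat)^2 \<le> (x - 3)^2 + 6 * x"
proof (cases "x \<ge> 3")
  case True
  then obtain y where "x = y + 3" by (metis le_add_diff_inverse2)
  then show ?thesis by (simp add: power2_eq_square algebra_simps)
next
  case False
  then have "x \<le> 2" by simp
  then have "x * x \<le> 2 * x" by simp
  moreover have "x - 3 = 0" using \<open>x \<le> 2\<close> by simp
  ultimately show ?thesis by (simp add: power2_eq_square)
qed

lemma G_ratio:
  assumes "G d > 1" "d \<le> 8 * m"
  shows "G d \<le> G m * 2 ^ (floor_log d div 8 + 1)"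
proof -
  define l where "l = floor_log d"
  have l31: "l \<ge> 31" using G_big assms(1) l_def by simp
  have dpos: "d > 0"
  proof (rule ccontr)
    assume "\<not> d > 0"
    then have "d = 0" by simp
    then show False using l31 l_def by simp
  qed
  have "2^l \<le> d" using floor_log_exp2_le[OF dpos] l_def by simp
  also have "\<dots> \<le> 8 * m" by (rule assms(2))
  finally have h: "2^l \<le> 8 * m" .
  have "(2::nat)^l = 8 * 2^(l-3)"
  proof -
    have "l = Suc (Suc (Suc (l-3)))" using l31 by simp
    then have "(2::nat)^l = 2^(Suc (Suc (Suc (l-3))))" by simp
    also have "\<dots> = 8 * 2^(l-3)" by simp
    finally show ?thesis .
  qed
  then have "2^(l-3) \<le> m" using h by simp
  then have "floor_log (2^(l-3)) \<le> floor_log m" by (rule floor_log_le_iff)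
  then have mu: "l - 3 \<le> floor_log m" by simp
  have "(l - 24 - 3)^2 \<le> (floor_log m - 24)^2" using mu by (intro power_mono) auto
  moreover have "(l - 24)^2 \<le> (l - 24 - 3)^2 + 6 * (l - 24)" by (rule sq_shift)
  ultimately have "(l - 24)^2 \<le> (floor_log m - 24)^2 + 6 * l" by linarith
  then have "(l - 24)^2 div 48 \<le> ((floor_log m - 24)^2 + 6 * l) div 48" by (rule div_le_mono)
  also have "\<dots> \<le> (floor_log m - 24)^2 div 48 + (6 * l) div 48 + 1" by (rule div_add_le)
  also have "(6 * l) div 48 = l div 8"
  proof -
    have "(6 * l) div (6 * 8) = l div 8" by (rule div_mult_mult1) simp
    then show ?thesis by simp
  qed
  finally have e: "(l - 24)^2 div 48 \<le> (floor_log m - 24)^2 div 48 + (l div 8 + 1)" by simp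
  have "G d = 2 ^ ((l - 24)^2 div 48)" by (simp add: G_def l_def)
  also have "\<dots> \<le> 2 ^ ((floor_log m - 24)^2 div 48 + (l div 8 + 1))" using e by (rule power_increasing) simp
  also have "\<dots> = G m * 2 ^ (l div 8 + 1)" by (simp add: G_def power_add)
  finally show ?thesis by (simp add: l_def)
qed


lemma fm_real:
  assumes r: "r \<le> a" and a1: "a \<ge> 1"
  shows "real ((a+b) choose a) * real ((c+e) choose c)
      \<le> real ((a+b+c+e) choose (a+c)) * (real (a+b) * real (a+c) / (real (a+b+c+e) * real (a-r+1)))^r"
proof -
  define L where "L = a+b+c+e"
  define d where "d = a+c"
  define l where "l = a+b"
  have Lpos: "real L > 0" using a1 by (simp add: L_def)
  have crpos: "real (a choose r) > 0" using r by simp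
  have h1: "real ((a+b) choose a) * real ((c+e) choose c) * real (a choose r)
      \<le> real (l choose r) * real ((L-r) choose (d-r))"
  proof -
    have "((a+b) choose a) * ((c+e) choose c) * (a choose r) \<le> (a+b choose r) * ((a+b+c+e-r) choose (a+c-r))"
      by (rule fm_nat[OF r])
    then have "real (((a+b) choose a) * ((c+e) choose c) * (a choose r)) \<le> real ((a+b choose r) * ((a+b+c+e-r) choose (a+c-r)))"
      by (simp only: of_nat_le_iff)
    then show ?thesis unfolding L_def d_def l_def by (simp only: of_nat_mult)
  qed
  have h2: "real (l choose r) \<le> real (a choose r) * (real l / real (a - r + 1)) ^ r"
    using fall_a[OF r, of l] by (simp add: l_def)
  have h3: "real ((L - r) choose (d - r)) * real L ^ r \<le> real (L choose d) * real d ^ r"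
    using r by (intro fall_L) (auto simp: L_def d_def)
  have h3': "real ((L - r) choose (d - r)) \<le> real (L choose d) * (real d / real L) ^ r"
  proof -
    have "real ((L - r) choose (d - r)) = real ((L - r) choose (d - r)) * real L ^ r / real L ^ r"
      using Lpos by simp
    also have "\<dots> \<le> real (L choose d) * real d ^ r / real L ^ r"
      using h3 Lpos by (intro divide_right_mono) auto
    also have "\<dots> = real (L choose d) * (real d / real L) ^ r" by (simp add: power_divide)
    finally show ?thesis .
  qed
  have pq: "real (l choose r) * real ((L - r) choose (d - r))
      \<le> (real (a choose r) * (real l / real (a - r + 1)) ^ r) * (real (L choose d) * (real d / real L) ^ r)"
    by (rule mult_mono[OF h2 h3']) auto
  have Apos: "real (a - r + 1) > 0" by simp
  have xy: "(real l / real (a - r + 1)) * (real d / real L) = real l * real d / (real L * real (a - r + 1))"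
    using Apos Lpos by (simp add: field_simps)
  have "real ((a+b) choose a) * real ((c+e) choose c) * real (a choose r)
      \<le> (real (a choose r) * (real l / real (a - r + 1)) ^ r) * (real (L choose d) * (real d / real L) ^ r)"
    using h1 pq by linarith
  also have "\<dots> = real (a choose r) * (real (L choose d) * ((real l / real (a - r + 1)) ^ r * (real d / real L) ^ r))"
    by (simp add: ac_simps)
  also have "(real l / real (a - r + 1)) ^ r * (real d / real L) ^ r = (real l * real d / (real L * real (a - r + 1)))^r"
    by (simp only: power_mult_distrib[symmetric] xy)
  finally have "real (a choose r) * (real ((a+b) choose a) * real ((c+e) choose c))
      \<le> real (a choose r) * (real (L choose d) * (real l * real d / (real L * real (a - r + 1)))^r)"
    by (simp add: ac_simps)
  then have "real ((a+b) choose a) * real ((c+e) choose c)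
      \<le> real (L choose d) * (real l * real d / (real L * real (a - r + 1)))^r"
    using crpos by (simp add: mult_le_cancel_left_pos)
  then show ?thesis by (simp add: L_def d_def l_def)
qed


lemma S_main:
  assumes h1: "a + c \<le> b + e" and h2: "a < c" and h3: "c \<le> 3*a"
  shows "gf (a+b+c+e) (a+c) * (real ((a+b) choose a) * real ((c+e) choose c))
       \<le> gf (a+b) a * real ((a+b+c+e) choose (a+c))"
proof -
  define L where "L = a+b+c+e"
  define d where "d = a+c"
  define l where "l = a+b"
  define X where "X = real ((a+b) choose a) * real ((c+e) choose c)"
  define CL where "CL = real (L choose d)"
  have a1: "a \<ge> 1" using h2 h3 by linarith
  have Xnn: "X \<ge> 0" by (simp add: X_def)
  have CLnn: "CL \<ge> 0" by (simp add: CL_def)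
  have dL: "2 * d \<le> L" using h1 by (simp add: d_def L_def)
  have d4: "d \<le> 4 * a" using h3 by (simp add: d_def)
  have Lpos: "real L > 0" using a1 by (simp add: L_def)
  have dpos: "real d > 0" using a1 by (simp add: d_def)
  have apos: "real a > 0" using a1 by simp
  have lpos: "real l > 0" using a1 by (simp add: l_def)
  have gfL: "gf L d = real L * G d / real d"
  proof -
    have "min d (L - d) = d" using dL by simp
    moreover have "d \<noteq> 0" using a1 by (simp add: d_def)
    ultimately show ?thesis by (simp add: gf_def)
  qed
  define Gm where "Gm = (if b = 0 then 1 else G (min a b))"
  have Gm1: "Gm \<ge> 1" using G_ge1 by (simp add: Gm_def)
  have gfl: "gf l a \<ge> real l * Gm / real a"
  proof (cases "b = 0")
    case True
    then have "min a (l - a) = 0" by (simp add: l_def)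
    moreover have "real l * Gm / real a = 1" using True apos by (simp add: Gm_def l_def)
    ultimately show ?thesis by (simp add: gf_def)
  next
    case False
    have m: "min a (l - a) = min a b" by (simp add: l_def)
    have mpos: "min a b \<noteq> 0" using False a1 by simp
    have "real l * G (min a b) / real a \<le> real l * G (min a b) / real (min a b)"
      using mpos lpos G_pos[of "min a b"] by (intro divide_left_mono) auto
    moreover have "gf l a = real l * G (min a b) / real (min a b)"
      unfolding gf_def m using mpos by simp
    ultimately show ?thesis using False by (simp add: Gm_def)
  qed
  have markov: "X \<le> CL * (real l * real d / (real L * real a))"
    using fm_real[of 1 a b c e] a1 by (simp add: X_def CL_def L_def d_def l_def)
  have mk: "real L * real a * X \<le> real l * real d * CL"
  proof -
    have "real L * real a * X \<le> real L * real a * (CL * (real l * real d / (real L * real a)))"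
      using markov Lpos apos by (intro mult_left_mono) auto
    also have "\<dots> = real l * real d * CL" using Lpos apos by (simp add: field_simps)
    finally show ?thesis .
  qed
  have main: "real L * G d * real a * X \<le> real l * real d * Gm * CL"
  proof (cases "G d \<le> Gm")
    case True
    have "real L * G d * real a * X = G d * (real L * real a * X)" by (simp add: ac_simps)
    also have "\<dots> \<le> G d * (real l * real d * CL)" using mk G_pos[of d] by (intro mult_left_mono) auto
    also have "\<dots> \<le> Gm * (real l * real d * CL)"
      using True lpos dpos CLnn by (intro mult_right_mono) auto
    finally show ?thesis by (simp add: ac_simps)
  next
    case False
    then have Gd1: "G d > 1" using Gm1 by linarith
    have decayA: "(5/6::real)^(a div 10) * G d \<le> 1/2" by (rule decay[OF Gd1 d4])
    show ?thesis
    proof (cases "4 * l * d \<le> 3 * L * a")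
      case A: True
      define r where "r = a div 10 + 1"
      have ra: "r \<le> a" using a1 by (simp add: r_def)
      have fm: "X \<le> CL * (real l * real d / (real L * real (a - r + 1)))^r"
        using fm_real[OF ra a1, of b c e] by (simp add: X_def CL_def L_def d_def l_def)
      have arr: "real (a - r + 1) \<ge> 9/10 * real a"
      proof -
        have "a - r + 1 = a - a div 10" using ra by (simp add: r_def)
        moreover have "10 * (a div 10) \<le> a" by simp
        ultimately have "10 * (a - r + 1) \<ge> 9 * a"
        proof -
          assume e: "a - r + 1 = a - a div 10" and q: "10 * (a div 10) \<le> a"
          obtain k where k: "a = a div 10 + k" using q by (metis le_add_diff_inverse div_le_dividend)
          then have "a - a div 10 = k" by simp
          then have kk: "a - r + 1 = k" using e by simp
          have "9 * a \<le> 10 * k" using k q by linarith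
          then show ?thesis using kk by simp
        qed
        then have "real (10 * (a - r + 1)) \<ge> real (9 * a)" by (simp only: of_nat_le_iff)
        then show ?thesis by simp
      qed
      define rho where "rho = real l * real d / (real L * real a)"
      have rho34: "rho \<le> 3/4"
      proof -
        have "real (4 * l * d) \<le> real (3 * L * a)" using A by (simp only: of_nat_le_iff)
        then have "4 * (real l * real d) \<le> 3 * (real L * real a)" by simp
        then show ?thesis using Lpos apos by (simp add: rho_def divide_le_eq)
      qed
      have rho0: "rho \<ge> 0" by (simp add: rho_def)
      define x where "x = real l * real d / (real L * real (a - r + 1))"
      have x0: "x \<ge> 0" by (simp add: x_def)
      have xle: "x \<le> 10/9 * rho"
      proof -
        have p1: "real L * real (a - r + 1) \<ge> real L * (9/10 * real a)"
          using arr Lpos by (intro mult_left_mono) auto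
        have p2: "real L * (9/10 * real a) > 0" using Lpos apos by simp
        have "x \<le> real l * real d / (real L * (9/10 * real a))"
          unfolding x_def using p1 p2 lpos dpos by (intro divide_left_mono) auto
        also have "\<dots> = 10/9 * rho" using Lpos apos by (simp add: rho_def field_simps)
        finally show ?thesis .
      qed
      have "x ^ r = x * x ^ (a div 10)" by (simp add: r_def)
      also have "\<dots> \<le> (10/9 * rho) * (10/9 * (3/4)) ^ (a div 10)"
      proof (intro mult_mono power_mono xle)
        show "x \<le> 10/9 * (3/4)" using xle rho34 by linarith
      qed (use x0 rho0 in auto)
      also have "\<dots> = 10/9 * rho * (5/6)^(a div 10)" by simp
      finally have xr: "x ^ r \<le> 10/9 * rho * (5/6)^(a div 10)" .
      have "real L * G d * real a * X \<le> real L * G d * real a * (CL * x ^ r)"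
        using fm Lpos apos G_pos[of d] by (intro mult_left_mono) (auto simp: x_def)
      also have "\<dots> \<le> real L * G d * real a * (CL * (10/9 * rho * (5/6)^(a div 10)))"
        using xr Lpos apos G_pos[of d] CLnn by (intro mult_left_mono) auto
      also have "\<dots> = (real L * real a * rho) * CL * (10/9) * ((5/6)^(a div 10) * G d)"
        by (simp add: ac_simps)
      also have "real L * real a * rho = real l * real d" using Lpos apos by (simp add: rho_def)
      also have "real l * real d * CL * (10/9) * ((5/6)^(a div 10) * G d) \<le> real l * real d * CL * (10/9) * (1/2)"
        using decayA lpos dpos CLnn by (intro mult_left_mono) auto
      also have "\<dots> = (real l * real d * CL) * (5/9)" by simp
      also have "\<dots> \<le> (real l * real d * CL) * Gm"
        using Gm1 lpos dpos CLnn by (intro mult_left_mono) auto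
      finally show ?thesis by (simp add: ac_simps)
    next
      case notA: False
      have big: "3 * (real L * real a) < 4 * (real l * real d)"
      proof -
        have "real (3 * L * a) < real (4 * l * d)" using notA by (simp only: of_nat_less_iff not_le)
        then show ?thesis by simp
      qed
      show ?thesis
      proof (cases "2 * e \<le> c")
        case B: True
        define r where "r = c div 10 + 1"
        have c1: "c \<ge> 1" using h2 by simp
        have rc: "r \<le> c" using c1 by (simp add: r_def)
        have fm0: "real ((c+e) choose c) * real ((a+b) choose a)
            \<le> real ((c+e+a+b) choose (c+a)) * (real (c+e) * real (c+a) / (real (c+e+a+b) * real (c-r+1)))^r"
          by (rule fm_real[OF rc c1])
        have fm: "X \<le> CL * (real (c+e) * real d / (real L * real (c-r+1)))^r"
        proof -
          have eq1: "c+e+a+b = L" by (simp add: L_def)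
          have eq2: "c+a = d" by (simp add: d_def)
          have "X = real ((c+e) choose c) * real ((a+b) choose a)" by (simp add: X_def mult.commute)
          then show ?thesis using fm0 unfolding eq1 eq2 CL_def by simp
        qed
        define y where "y = real (c+e) * real d / (real L * real (c-r+1))"
        have y0: "y \<ge> 0" by (simp add: y_def)
        have crr: "real (c - r + 1) \<ge> 9/10 * real c"
        proof -
          have "c - r + 1 = c - c div 10" using rc by (simp add: r_def)
          moreover have "10 * (c div 10) \<le> c" by simp
          ultimately have "10 * (c - r + 1) \<ge> 9 * c"
          proof -
            assume e: "c - r + 1 = c - c div 10" and q: "10 * (c div 10) \<le> c"
            obtain k where k: "c = c div 10 + k" using q by (metis le_add_diff_inverse div_le_dividend)
            then have "c - c div 10 = k" by simp
            then have kk: "c - r + 1 = k" using e by simp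
            have "9 * c \<le> 10 * k" using k q by linarith
            then show ?thesis using kk by simp
          qed
          then have "real (10 * (c - r + 1)) \<ge> real (9 * c)" by (simp only: of_nat_le_iff)
          then show ?thesis by simp
        qed
        have y56: "y \<le> 5/6"
        proof -
          have cpos: "real c > 0" using c1 by simp
          have q1: "real (c+e) \<le> 3/2 * real c" using B by simp
          have q2: "2 * real d \<le> real L"
          proof -
            have "real (2*d) \<le> real L" using dL by (simp only: of_nat_le_iff)
            then show ?thesis by simp
          qed
          have num: "real (c+e) * real d \<le> (3/2 * real c) * (real L / 2)"
            using q1 q2 dpos by (intro mult_mono) auto
          have den: "real L * real (c - r + 1) \<ge> real L * (9/10 * real c)"
            using crr Lpos by (intro mult_left_mono) auto
          have denp: "real L * (9/10 * real c) > 0" using Lpos cpos by simp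
          have "y \<le> (3/2 * real c) * (real L / 2) / (real L * (9/10 * real c))"
            unfolding y_def
          proof (rule frac_le)
            show "0 \<le> (3/2 * real c) * (real L / 2)" using cpos Lpos by simp
          qed (use num den denp in auto)
          also have "\<dots> = 5/6" using Lpos cpos by (simp add: field_simps)
          finally show ?thesis .
        qed
        have "y ^ r \<le> (5/6)^r" by (rule power_mono[OF y56 y0])
        also have "(5/6::real)^r \<le> (5/6)^(a div 10)"
        proof (rule power_decreasing)
          have "a div 10 \<le> c div 10" using h2 by (intro div_le_mono) simp
          then show "a div 10 \<le> r" by (simp add: r_def)
        qed simp_all
        finally have yr: "y ^ r \<le> (5/6)^(a div 10)" .
        have "real L * G d * real a * X = G d * ((real L * real a) * X)" by (simp add: ac_simps)
        also have "\<dots> \<le> G d * ((4/3 * (real l * real d)) * X)"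
          using big Xnn G_pos[of d] by (intro mult_left_mono mult_right_mono) auto
        also have "\<dots> \<le> G d * ((4/3 * (real l * real d)) * (CL * y ^ r))"
          using fm G_pos[of d] lpos dpos by (intro mult_left_mono) (auto simp: y_def)
        also have "\<dots> \<le> G d * ((4/3 * (real l * real d)) * (CL * (5/6)^(a div 10)))"
          using yr G_pos[of d] lpos dpos CLnn by (intro mult_left_mono) auto
        also have "\<dots> = (4/3 * (real l * real d) * CL) * ((5/6)^(a div 10) * G d)" by (simp add: ac_simps)
        also have "\<dots> \<le> (4/3 * (real l * real d) * CL) * (1/2)"
          using decayA lpos dpos CLnn by (intro mult_left_mono) auto
        also have "\<dots> \<le> real l * real d * Gm * CL"
        proof -
          have "(4/3 * (real l * real d) * CL) * (1/2) \<le> real l * real d * CL" using lpos dpos CLnn by simp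
          also have "\<dots> = real l * real d * CL * 1" by simp
          also have "\<dots> \<le> real l * real d * CL * Gm" using Gm1 lpos dpos CLnn by (intro mult_left_mono) auto
          finally show ?thesis by (simp add: ac_simps)
        qed
        finally show ?thesis .
      next
        case C: False
        have b2: "a < 2 * b"
        proof (rule ccontr)
          assume "\<not> a < 2 * b"
          then have "2 * l \<le> 3 * a" by (simp add: l_def)
          then have "real (2 * l) \<le> real (3 * a)" by (simp only: of_nat_le_iff)
          then have r1: "2 * real l \<le> 3 * real a" by simp
          have r2: "2 * real d \<le> real L"
          proof -
            have "real (2*d) \<le> real L" using dL by (simp only: of_nat_le_iff)
            then show ?thesis by simp
          qed
          have "4 * (real l * real d) = (2 * real l) * (2 * real d)" by simp
          also have "\<dots> \<le> (3 * real a) * (2 * real d)" using r1 dpos by (intro mult_right_mono) auto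
          also have "\<dots> \<le> (3 * real a) * real L" using r2 apos by (intro mult_left_mono) auto
          finally have "4 * (real l * real d) \<le> (3 * real a) * real L" .
          moreover have "(3 * real a) * real L = 3 * (real L * real a)" by simp
          ultimately show False using big by linarith
        qed
        then have b1: "b \<noteq> 0" by simp
        define m where "m = min a b"
        define t where "t = min (min a b) (min c e)"
        have t8: "d \<le> 8 * t"
        proof -
          have "t = a \<or> t = b \<or> t = c \<or> t = e" by (auto simp: t_def min_def)
          moreover have "d \<le> 8 * a" using d4 by linarith
          moreover have "d \<le> 8 * b" using b2 d4 by linarith
          moreover have "d \<le> 8 * c" using h2 by (simp add: d_def)
          moreover have "d \<le> 8 * e" using C h2 by (simp add: d_def)
          ultimately show ?thesis by auto
        qed
        have dm: "d \<le> 8 * m"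
        proof -
          have "t \<le> m" unfolding t_def m_def by (rule min.cobounded1)
          then show ?thesis using t8 by linarith
        qed
        define lam where "lam = floor_log d"
        have l31: "lam \<ge> 31" using G_big Gd1 lam_def by simp
        have dnz: "d > 0" using a1 by (simp add: d_def)
        have pd: "2^lam \<le> d" using floor_log_exp2_le[OF dnz] lam_def by simp
        define p where "p = lam div 2"
        define s where "s = 2^(p-3) - (1::nat)"
        have s1: "s + 1 = 2^(p-3)" by (simp add: s_def)
        have st: "4 * s * (s+1) \<le> t"
        proof -
          have "4 * s * (s+1) \<le> 4 * (s+1) * (s+1)" by (intro mult_le_mono1) simp
          also have "\<dots> = 2^(2*(p-3)+2)"
          proof -
            have "(2::nat)^(2*(p-3)+2) = 2^(p-3) * 2^(p-3) * 2^2"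
              by (simp only: mult_2 power_add)
            then show ?thesis using s1 by simp
          qed
          also have "\<dots> \<le> 2^(lam-3)"
            by (rule power_increasing) (use l31 in \<open>simp_all add: p_def\<close>)
          also have "\<dots> \<le> t"
          proof -
            have "(2::nat)^lam = 8 * 2^(lam-3)"
            proof -
              have "lam = Suc (Suc (Suc (lam-3)))" using l31 by simp
              then have "(2::nat)^lam = 2^(Suc (Suc (Suc (lam-3))))" by simp
              also have "\<dots> = 8 * 2^(lam-3)" by simp
              finally show ?thesis .
            qed
            then show ?thesis using pd t8 by linarith
          qed
          finally show ?thesis .
        qed
        have acb: "real (s+1) * X \<le> 2 * CL"
          using ac[of t a b c e s] st by (simp add: t_def X_def CL_def L_def d_def)
        have Gr: "G d \<le> G m * 2 ^ (lam div 8 + 1)"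
          using G_ratio[OF Gd1 dm] by (simp add: lam_def)
        have ex: "lam div 8 + 3 \<le> p - 3" using l31 by (simp add: p_def)
        have sp: "real (s+1) = 2^(p-3)" using s1 by (metis of_nat_numeral of_nat_power)
        have "(8/3::real) * 2 ^ (lam div 8 + 1) \<le> 2^(lam div 8 + 3)"
          by (simp add: power_add)
        also have "\<dots> \<le> 2^(p-3)" using ex by (rule power_increasing) simp
        finally have pw: "(8/3::real) * 2 ^ (lam div 8 + 1) \<le> real (s+1)" using sp by simp
        have spos: "real (s+1) > 0" by simp
        have Xb: "X \<le> 2 * CL / real (s+1)" using acb spos by (simp add: field_simps)
        have "real L * G d * real a * X = G d * ((real L * real a) * X)" by (simp add: ac_simps)
        also have "\<dots> \<le> G d * ((4/3 * (real l * real d)) * X)"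
          using big Xnn G_pos[of d] by (intro mult_left_mono mult_right_mono) auto
        also have "\<dots> \<le> G d * ((4/3 * (real l * real d)) * (2 * CL / real (s+1)))"
          using Xb G_pos[of d] lpos dpos by (intro mult_left_mono) auto
        also have "\<dots> = (real l * real d * CL) * (G d * (8/3) / real (s+1))" by (simp add: field_simps)
        also have "\<dots> \<le> (real l * real d * CL) * (G m * 2 ^ (lam div 8 + 1) * (8/3) / real (s+1))"
          using Gr lpos dpos CLnn spos by (intro mult_left_mono divide_right_mono mult_right_mono) auto
        also have "\<dots> \<le> (real l * real d * CL) * G m"
        proof -
          have "G m * 2 ^ (lam div 8 + 1) * (8/3) = G m * ((8/3) * 2 ^ (lam div 8 + 1))" by simp
          also have "\<dots> \<le> G m * real (s+1)" using pw G_pos[of m] by (intro mult_left_mono) auto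
          finally have fin: "G m * 2 ^ (lam div 8 + 1) * (8/3) \<le> G m * real (s+1)" .
          have "G m * 2 ^ (lam div 8 + 1) * (8/3) / real (s+1) \<le> G m * real (s+1) / real (s+1)"
            using fin spos by (intro divide_right_mono) auto
          then have "G m * 2 ^ (lam div 8 + 1) * (8/3) / real (s+1) \<le> G m"
            using spos by simp
          then show ?thesis using lpos dpos CLnn by (intro mult_left_mono) auto
        qed
        also have "\<dots> = real l * real d * Gm * CL" using b1 by (simp add: Gm_def m_def ac_simps)
        finally show ?thesis .
      qed
    qed
  qed
  have "gf L d * X = (real L * G d * real a * X) / (real a * real d)" using gfL apos dpos by (simp add: field_simps)
  also have "\<dots> \<le> (real l * real d * Gm * CL) / (real a * real d)"
    using main apos dpos by (intro divide_right_mono) auto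
  also have "\<dots> = (real l * Gm / real a) * CL" using apos dpos by (simp add: field_simps)
  also have "\<dots> \<le> gf l a * CL" using gfl CLnn by (intro mult_right_mono) auto
  finally show ?thesis by (simp add: L_def d_def l_def X_def CL_def)
qed


fun leaves :: "rexp \<Rightarrow> nat" where
  "leaves Eps = 1"
| "leaves (Lit a) = 1"
| "leaves (Union r s) = leaves r + leaves s"
| "leaves (Concat r s) = leaves r + leaves s"

fun mu :: "rexp \<Rightarrow> nat" where
  "mu Eps = 0"
| "mu (Lit a) = (if a then 1 else 0)"
| "mu (Union r s) = min (mu r) (mu s)"
| "mu (Concat r s) = mu r + mu s"

definition Amin :: "rexp \<Rightarrow> bool list set" where
  "Amin r = {w \<in> lang r. ones w = mu r}"

definition hom :: "rexp \<Rightarrow> nat \<Rightarrow> bool" where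
  "hom r l = (\<forall>w\<in>lang r. length w = l)"

lemma ones_append[simp]: "ones (u @ v) = ones u + ones v"
  by (simp add: ones_def)

lemma ones_le_length: "ones w \<le> length w"
  by (simp add: ones_def)

lemma lang_nonempty: "lang r \<noteq> {}"
  by (induction r) auto

lemma finite_lang: "finite (lang r)"
proof (induction r)
  case (Concat r s)
  have "lang (Concat r s) = (\<lambda>(u,v). u @ v) ` (lang r \<times> lang s)" by auto
  then show ?case using Concat by simp
qed auto

lemma mu_le: "w \<in> lang r \<Longrightarrow> mu r \<le> ones w"
proof (induction r arbitrary: w)
  case (Lit a) then show ?case by (simp add: ones_def)
next
  case (Union r s) then show ?case by fastforce
next
  case (Concat r s)
  then obtain u v where "w = u @ v" "u \<in> lang r" "v \<in> lang s" by auto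
  then show ?case using Concat.IH by fastforce
qed simp

lemma mu_ex: "\<exists>w\<in>lang r. ones w = mu r"
proof (induction r)
  case Eps then show ?case by (simp add: ones_def)
next
  case (Lit a) then show ?case by (simp add: ones_def)
next
  case (Union r s) then show ?case by (auto simp: min_def)
next
  case (Concat r s)
  then obtain u v where "u \<in> lang r" "ones u = mu r" "v \<in> lang s" "ones v = mu s" by auto
  then show ?case by (intro bexI[of _ "u @ v"]) auto
qed

lemma hom_mu_le: "hom r l \<Longrightarrow> mu r \<le> l"
proof -
  assume h: "hom r l"
  obtain w where "w \<in> lang r" "ones w = mu r" using mu_ex[of r] by blast
  then show ?thesis using h ones_le_length[of w] unfolding hom_def by auto
qed

lemma hom_union: "hom (Union r s) l \<Longrightarrow> hom r l \<and> hom s l"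
  by (simp add: hom_def)

lemma hom_concat:
  assumes "hom (Concat r s) l"
  shows "\<exists>l1 l2. hom r l1 \<and> hom s l2 \<and> l = l1 + l2"
proof -
  obtain u0 where u0: "u0 \<in> lang r" using lang_nonempty by blast
  obtain v0 where v0: "v0 \<in> lang s" using lang_nonempty by blast
  have h: "\<And>u v. u \<in> lang r \<Longrightarrow> v \<in> lang s \<Longrightarrow> length u + length v = l"
    using assms unfolding hom_def by fastforce
  have "hom r (length u0)" unfolding hom_def using h[OF _ v0] h[OF u0 v0] by fastforce
  moreover have "hom s (length v0)" unfolding hom_def using h[OF u0] h[OF u0 v0] by fastforce
  ultimately show ?thesis using h[OF u0 v0] by blast
qed

definition E :: "nat \<Rightarrow> nat \<Rightarrow> bool list set" where
  "E l k = {w. length w = l \<and> ones w = k}"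

lemma E_finite: "finite (E l k)"
proof -
  have "E l k \<subseteq> {w. set w \<subseteq> UNIV \<and> length w = l}" by (auto simp: E_def)
  moreover have "finite {w::bool list. set w \<subseteq> UNIV \<and> length w = l}"
    by (rule finite_lists_length_eq) simp
  ultimately show ?thesis by (rule finite_subset)
qed

lemma ones_Cons[simp]: "ones (x # w) = (if x then Suc (ones w) else ones w)"
  by (simp add: ones_def)

lemma E_Suc_Suc: "E (Suc l) (Suc k) = (Cons True) ` E l k \<union> (Cons False) ` E l (Suc k)"
proof
  show "E (Suc l) (Suc k) \<subseteq> (Cons True) ` E l k \<union> (Cons False) ` E l (Suc k)"
  proof
    fix w assume "w \<in> E (Suc l) (Suc k)"
    then obtain x v where w: "w = x # v" "length v = l" "ones (x # v) = Suc k"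
      by (auto simp: E_def length_Suc_conv)
    then show "w \<in> (Cons True) ` E l k \<union> (Cons False) ` E l (Suc k)"
      by (cases x) (auto simp: E_def)
  qed
qed (auto simp: E_def)

lemma E_Suc_0: "E (Suc l) 0 = (Cons False) ` E l 0"
proof
  show "E (Suc l) 0 \<subseteq> (Cons False) ` E l 0"
  proof
    fix w assume "w \<in> E (Suc l) 0"
    then obtain x v where w: "w = x # v" "length v = l" "ones (x # v) = 0"
      by (auto simp: E_def length_Suc_conv)
    then show "w \<in> (Cons False) ` E l 0"
      by (cases x) (auto simp: E_def)
  qed
qed (auto simp: E_def)

lemma card_E: "card (E l k) = l choose k"
proof (induction l arbitrary: k)
  case 0
  have "E 0 k = (if k = 0 then {[]} else {})" by (auto simp: E_def ones_def)
  then show ?case by simp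
next
  case (Suc l)
  show ?case
  proof (cases k)
    case 0
    then show ?thesis using E_Suc_0 Suc.IH[of 0] by (simp add: card_image)
  next
    case (Suc k')
    have "card (E (Suc l) (Suc k')) = card ((Cons True) ` E l k') + card ((Cons False) ` E l (Suc k'))"
      unfolding E_Suc_Suc by (rule card_Un_disjoint) (auto simp: E_finite)
    also have "\<dots> = card (E l k') + card (E l (Suc k'))" by (simp add: card_image)
    finally show ?thesis using Suc Suc.IH by simp
  qed
qed

lemma card_Amin_le: "hom r l \<Longrightarrow> card (Amin r) \<le> l choose (mu r)"
proof -
  assume "hom r l"
  then have "Amin r \<subseteq> E l (mu r)" by (auto simp: Amin_def E_def hom_def)
  then have "card (Amin r) \<le> card (E l (mu r))" by (rule card_mono[OF E_finite])
  then show ?thesis by (simp add: card_E)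
qed

lemma Amin_concat: "card (Amin (Concat r s)) \<le> card (Amin r) * card (Amin s)"
proof -
  have "Amin (Concat r s) \<subseteq> (\<lambda>(u,v). u @ v) ` (Amin r \<times> Amin s)"
  proof
    fix w assume "w \<in> Amin (Concat r s)"
    then obtain u v where w: "w = u @ v" "u \<in> lang r" "v \<in> lang s" "ones u + ones v = mu r + mu s"
      by (auto simp: Amin_def)
    have "mu r \<le> ones u" "mu s \<le> ones v" using mu_le w by auto
    then have "ones u = mu r" "ones v = mu s" using w by auto
    then show "w \<in> (\<lambda>(u,v). u @ v) ` (Amin r \<times> Amin s)" using w by (auto simp: Amin_def)
  qed
  moreover have "finite (Amin r \<times> Amin s)"
    using finite_lang by (auto simp: Amin_def)
  ultimately have "card (Amin (Concat r s)) \<le> card (Amin r \<times> Amin s)"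
    by (meson card_image_le card_mono finite_imageI order_trans)
  then show ?thesis by (simp add: card_cartesian_product)
qed

lemma Amin_union_lt: "mu r < mu s \<Longrightarrow> Amin (Union r s) = Amin r"
  using mu_le[of _ s] by (auto simp: Amin_def) (metis not_le)

lemma Amin_union_gt: "mu s < mu r \<Longrightarrow> Amin (Union r s) = Amin s"
  using mu_le[of _ r] by (auto simp: Amin_def) (metis not_le)

lemma Amin_union_eq: "mu r = mu s \<Longrightarrow> card (Amin (Union r s)) \<le> card (Amin r) + card (Amin s)"
proof -
  assume "mu r = mu s"
  then have "Amin (Union r s) = Amin r \<union> Amin s" by (auto simp: Amin_def)
  then show ?thesis by (simp add: card_Un_le)
qed

lemma nodes_leaves: "nodes r + 1 = 2 * leaves r"
  by (induction r) auto

lemma leaves_length: "w \<in> lang r \<Longrightarrow> length w \<le> leaves r"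
proof (induction r arbitrary: w)
  case (Union r s) then show ?case by fastforce
next
  case (Concat r s)
  then obtain u v where "w = u @ v" "u \<in> lang r" "v \<in> lang s" by auto
  then show ?case using Concat.IH by fastforce
qed auto


lemma S_ones:
  assumes "2 * d \<le> L" "d \<le> 4 * m" "2 * m < d" "m \<le> l" "l - m \<le> L - d" "l \<le> L"
  shows "gf L d * (real (l choose m) * real ((L - l) choose (d - m))) \<le> gf l m * real (L choose d)"
proof -
  define a where "a = m"
  define b where "b = l - m"
  define c where "c = d - m"
  define e where "e = (L - d) - (l - m)"
  have md: "m \<le> d" using assms by linarith
  have eq1: "a + b = l" using assms by (simp add: a_def b_def)
  have eq2: "c + e = L - l" using assms md by (simp add: c_def e_def)
  have eq3: "a+b+c+e = L" using assms md by (simp add: a_def b_def c_def e_def)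
  have eq4: "a + c = d" using md by (simp add: a_def c_def)
  have "gf (a+b+c+e) (a+c) * (real ((a+b) choose a) * real ((c+e) choose c))
       \<le> gf (a+b) a * real ((a+b+c+e) choose (a+c))"
    by (rule S_main) (use assms md in \<open>simp_all add: a_def b_def c_def e_def\<close>)
  note R = this[unfolded eq3]
  note R2 = R[unfolded eq4]
  note R3 = R2[unfolded eq1 eq2]
  then show ?thesis by (simp add: a_def c_def)
qed

lemma gf_sym: "d \<le> L \<Longrightarrow> gf L (L - d) = gf L d"
proof -
  assume "d \<le> L"
  then have "L - (L - d) = d" by simp
  then have m: "min (L - d) (L - (L - d)) = min d (L - d)" by (simp add: min.commute)
  show ?thesis unfolding gf_def m by simp
qed

lemma S_zeros:
  assumes "L \<le> 2 * d" "L - d \<le> 4 * (l - m)" "2 * (l - m) < L - d" "m \<le> l" "l - m \<le> L - d" "l \<le> L"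
    "m \<le> d" "d \<le> L"
  shows "gf L d * (real (l choose m) * real ((L - l) choose (d - m))) \<le> gf l m * real (L choose d)"
proof -
  have "gf L (L - d) * (real (l choose (l - m)) * real ((L - l) choose ((L - d) - (l - m))))
      \<le> gf l (l - m) * real (L choose (L - d))"
    by (rule S_ones) (use assms in auto)
  moreover have "gf L (L - d) = gf L d" using assms by (simp add: gf_sym)
  moreover have "gf l (l - m) = gf l m" using assms by (simp add: gf_sym)
  moreover have "l choose (l - m) = l choose m" using assms by (simp add: binomial_symmetric[symmetric])
  moreover have "L choose (L - d) = L choose d" using assms by (simp add: binomial_symmetric[symmetric])
  moreover have "(L - l) choose ((L - d) - (l - m)) = (L - l) choose (d - m)"
  proof -
    have "(L - l) choose (d - m) = (L - l) choose ((L - l) - (d - m))"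
      by (rule binomial_symmetric) (use assms in linarith)
    moreover have "(L - l) - (d - m) = (L - d) - (l - m)" using assms by linarith
    ultimately show ?thesis by simp
  qed
  ultimately show ?thesis by simp
qed

definition heavy :: "nat \<Rightarrow> nat \<Rightarrow> nat \<Rightarrow> nat \<Rightarrow> bool" where
  "heavy L d l m = ((2 * d \<le> L \<and> d \<le> 2 * m) \<or> (L \<le> 2 * d \<and> L - d \<le> 2 * (l - m)))"

lemma gf_nonneg: "gf L d \<ge> 0"
  by (simp add: gf_def G_pos less_imp_le)


lemma G_le2: "m \<le> 2 \<Longrightarrow> G m = 1"
proof -
  assume "m \<le> 2"
  then have "floor_log m \<le> floor_log 2" by (rule floor_log_le_iff)
  also have "floor_log 2 = 1" by (simp add: floor_log_rec)
  finally show ?thesis by (intro G_small) simp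
qed

lemma gf_small:
  assumes "min d (L - d) = k" "1 \<le> k" "k \<le> 2"
  shows "gf L d = real L / real k"
  using assms G_le2[of k] by (simp add: gf_def)

lemma claim_concat_core:
  fixes L d l1 l2 m1 m2 :: nat and A A1 A2 lv1 lv2 :: real
  assumes l: "l1 + l2 \<le> L" and md: "m1 + m2 \<le> d" and dL: "d \<le> L"
    and ml: "m1 \<le> l1" "m2 \<le> l2" and zz: "(l1 + l2) - (m1 + m2) \<le> L - d"
    and hv: "heavy L d (l1+l2) (m1+m2)"
    and cA: "A \<le> A1 * A2" and cA1: "A1 \<le> real (l1 choose m1)" and cA2: "A2 \<le> real (l2 choose m2)"
    and A0: "A \<ge> 0" "A1 \<ge> 0" "A2 \<ge> 0"
    and IH1: "\<And>L' d'. l1 \<le> L' \<Longrightarrow> m1 \<le> d' \<Longrightarrow> l1 - m1 \<le> L' - d' \<Longrightarrow> d' \<le> L' \<Longrightarrow> heavy L' d' l1 m1 \<Longrightarrow>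
         A1 * real ((L' - l1) choose (d' - m1)) * gf L' d' \<le> lv1 * real (L' choose d')"
    and IH2: "\<And>L' d'. l2 \<le> L' \<Longrightarrow> m2 \<le> d' \<Longrightarrow> l2 - m2 \<le> L' - d' \<Longrightarrow> d' \<le> L' \<Longrightarrow> heavy L' d' l2 m2 \<Longrightarrow>
         A2 * real ((L' - l2) choose (d' - m2)) * gf L' d' \<le> lv2 * real (L' choose d')"
    and lv: "lv1 \<ge> 0" "lv2 \<ge> 0"
  shows "A * real ((L - (l1+l2)) choose (d - (m1+m2))) * gf L d \<le> (lv1 + lv2) * real (L choose d)"
proof -
  define l where "l = l1 + l2"
  define m where "m = m1 + m2"
  define g where "g = gf L d"
  define CL where "CL = real (L choose d)"
  have g0: "g \<ge> 0" by (simp add: g_def gf_nonneg)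
  have CL0: "CL \<ge> 0" by (simp add: CL_def)
  have K1: "A * real ((L - l) choose (d - m)) \<le> A1 * real ((L - l1) choose (d - m1))"
  proof -
    have v: "(l2 choose m2) * ((L - l) choose (d - m)) \<le> (l2 + (L - l)) choose (m2 + (d - m))"
      by (rule vand_term)
    have e1: "l2 + (L - l) = L - l1" using l by (simp add: l_def)
    have e2: "m2 + (d - m) = d - m1" using md by (simp add: m_def)
    have v': "real (l2 choose m2) * real ((L - l) choose (d - m)) \<le> real ((L - l1) choose (d - m1))"
      using v unfolding e1 e2 by (metis of_nat_le_iff of_nat_mult)
    have "A * real ((L - l) choose (d - m)) \<le> (A1 * A2) * real ((L - l) choose (d - m))"
      using cA by (intro mult_right_mono) auto
    also have "\<dots> \<le> (A1 * real (l2 choose m2)) * real ((L - l) choose (d - m))"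
      using cA2 A0 by (intro mult_right_mono mult_left_mono) auto
    also have "\<dots> = A1 * (real (l2 choose m2) * real ((L - l) choose (d - m)))" by simp
    also have "\<dots> \<le> A1 * real ((L - l1) choose (d - m1))" using v' A0 by (intro mult_left_mono) auto
    finally show ?thesis .
  qed
  have K2: "A * real ((L - l) choose (d - m)) \<le> A2 * real ((L - l2) choose (d - m2))"
  proof -
    have v: "(l1 choose m1) * ((L - l) choose (d - m)) \<le> (l1 + (L - l)) choose (m1 + (d - m))"
      by (rule vand_term)
    have e1: "l1 + (L - l) = L - l2" using l by (simp add: l_def)
    have e2: "m1 + (d - m) = d - m2" using md by (simp add: m_def)
    have v': "real (l1 choose m1) * real ((L - l) choose (d - m)) \<le> real ((L - l2) choose (d - m2))"
      using v unfolding e1 e2 by (metis of_nat_le_iff of_nat_mult)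
    have "A * real ((L - l) choose (d - m)) \<le> (A1 * A2) * real ((L - l) choose (d - m))"
      using cA by (intro mult_right_mono) auto
    also have "\<dots> \<le> (real (l1 choose m1) * A2) * real ((L - l) choose (d - m))"
      using cA1 A0 by (intro mult_right_mono) auto
    also have "\<dots> = A2 * (real (l1 choose m1) * real ((L - l) choose (d - m)))" by simp
    also have "\<dots> \<le> A2 * real ((L - l2) choose (d - m2))" using v' A0 by (intro mult_left_mono) auto
    finally show ?thesis .
  qed
  have c1: "l1 \<le> L" "m1 \<le> d" "l1 - m1 \<le> L - d" using l md zz ml by auto
  have c2: "l2 \<le> L" "m2 \<le> d" "l2 - m2 \<le> L - d" using l md zz ml by auto
  have fin1: "A * real ((L - l) choose (d - m)) * g \<le> (lv1 + lv2) * CL"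
    if "A1 * real ((L - l1) choose (d - m1)) * g \<le> lv1 * CL"
  proof -
    have "A * real ((L - l) choose (d - m)) * g \<le> A1 * real ((L - l1) choose (d - m1)) * g"
      using K1 g0 by (intro mult_right_mono) auto
    also have "\<dots> \<le> lv1 * CL" by (rule that)
    also have "\<dots> \<le> (lv1 + lv2) * CL" using lv CL0 by (intro mult_right_mono) auto
    finally show ?thesis .
  qed
  have fin2: "A * real ((L - l) choose (d - m)) * g \<le> (lv1 + lv2) * CL"
    if "A2 * real ((L - l2) choose (d - m2)) * g \<le> lv2 * CL"
  proof -
    have "A * real ((L - l) choose (d - m)) * g \<le> A2 * real ((L - l2) choose (d - m2)) * g"
      using K2 g0 by (intro mult_right_mono) auto
    also have "\<dots> \<le> lv2 * CL" by (rule that)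
    also have "\<dots> \<le> (lv1 + lv2) * CL" using lv CL0 by (intro mult_right_mono) auto
    finally show ?thesis .
  qed
  have sw1: "A1 * real ((L - l1) choose (d - m1)) * g \<le> lv1 * CL"
    if S: "gf L d * (real (l1 choose m1) * real ((L - l1) choose (d - m1))) \<le> gf l1 m1 * real (L choose d)"
  proof -
    have own: "A1 * real ((l1 - l1) choose (m1 - m1)) * gf l1 m1 \<le> lv1 * real (l1 choose m1)"
      by (rule IH1) (use ml in \<open>auto simp: heavy_def\<close>)
    then have own': "A1 * gf l1 m1 \<le> lv1 * real (l1 choose m1)" by simp
    have cpos: "real (l1 choose m1) > 0" using ml by simp
    have "(A1 * real ((L - l1) choose (d - m1)) * g) * real (l1 choose m1)
        = A1 * (gf L d * (real (l1 choose m1) * real ((L - l1) choose (d - m1))))"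
      by (simp add: g_def ac_simps)
    also have "\<dots> \<le> A1 * (gf l1 m1 * real (L choose d))" using S A0 by (intro mult_left_mono) auto
    also have "\<dots> = (A1 * gf l1 m1) * CL" by (simp add: CL_def)
    also have "\<dots> \<le> (lv1 * real (l1 choose m1)) * CL" using own' CL0 by (intro mult_right_mono) auto
    also have "\<dots> = (lv1 * CL) * real (l1 choose m1)" by simp
    finally show ?thesis using cpos by (simp add: mult_le_cancel_right)
  qed
  have sw2: "A2 * real ((L - l2) choose (d - m2)) * g \<le> lv2 * CL"
    if S: "gf L d * (real (l2 choose m2) * real ((L - l2) choose (d - m2))) \<le> gf l2 m2 * real (L choose d)"
  proof -
    have own: "A2 * real ((l2 - l2) choose (m2 - m2)) * gf l2 m2 \<le> lv2 * real (l2 choose m2)"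
      by (rule IH2) (use ml in \<open>auto simp: heavy_def\<close>)
    then have own': "A2 * gf l2 m2 \<le> lv2 * real (l2 choose m2)" by simp
    have cpos: "real (l2 choose m2) > 0" using ml by simp
    have "(A2 * real ((L - l2) choose (d - m2)) * g) * real (l2 choose m2)
        = A2 * (gf L d * (real (l2 choose m2) * real ((L - l2) choose (d - m2))))"
      by (simp add: g_def ac_simps)
    also have "\<dots> \<le> A2 * (gf l2 m2 * real (L choose d))" using S A0 by (intro mult_left_mono) auto
    also have "\<dots> = (A2 * gf l2 m2) * CL" by (simp add: CL_def)
    also have "\<dots> \<le> (lv2 * real (l2 choose m2)) * CL" using own' CL0 by (intro mult_right_mono) auto
    also have "\<dots> = (lv2 * CL) * real (l2 choose m2)" by simp
    finally show ?thesis using cpos by (simp add: mult_le_cancel_right)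
  qed
  have goal: "A * real ((L - l) choose (d - m)) * g \<le> (lv1 + lv2) * CL"
  proof (cases "heavy L d l1 m1")
    case True
    show ?thesis by (rule fin1) (use IH1[OF c1 dL True] in \<open>simp add: g_def CL_def\<close>)
  next
    case n1: False
    show ?thesis
    proof (cases "heavy L d l2 m2")
      case True
      show ?thesis by (rule fin2) (use IH2[OF c2 dL True] in \<open>simp add: g_def CL_def\<close>)
    next
      case n2: False
      show ?thesis
      proof (cases "2 * d \<le> L \<and> d \<le> 2 * m")
        case ones: True
        have lt1: "2 * m1 < d" using n1 ones by (auto simp: heavy_def)
        have lt2: "2 * m2 < d" using n2 ones by (auto simp: heavy_def)
        show ?thesis
        proof (cases "d \<le> 4 * m1")
          case True
          have "gf L d * (real (l1 choose m1) * real ((L - l1) choose (d - m1))) \<le> gf l1 m1 * real (L choose d)"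
            by (rule S_ones) (use ones True lt1 c1 ml in auto)
          then show ?thesis by (intro fin1 sw1)
        next
          case False
          then have "d \<le> 4 * m2" using ones by (simp add: m_def)
          then have "gf L d * (real (l2 choose m2) * real ((L - l2) choose (d - m2))) \<le> gf l2 m2 * real (L choose d)"
            by (intro S_ones) (use ones lt2 c2 ml in auto)
          then show ?thesis by (intro fin2 sw2)
        qed
      next
        case zer: False
        then have zer': "L \<le> 2 * d" "L - d \<le> 2 * (l - m)" using hv by (auto simp: heavy_def l_def m_def)
        have lt1: "2 * (l1 - m1) < L - d" using n1 zer' by (auto simp: heavy_def)
        have lt2: "2 * (l2 - m2) < L - d" using n2 zer' by (auto simp: heavy_def)
        have lm: "l - m = (l1 - m1) + (l2 - m2)" using ml by (simp add: l_def m_def)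
        show ?thesis
        proof (cases "L - d \<le> 4 * (l1 - m1)")
          case True
          have "gf L d * (real (l1 choose m1) * real ((L - l1) choose (d - m1))) \<le> gf l1 m1 * real (L choose d)"
            by (rule S_zeros) (use zer' True lt1 c1 ml dL in auto)
          then show ?thesis by (intro fin1 sw1)
        next
          case False
          then have "L - d \<le> 4 * (l2 - m2)" using zer' lm by linarith
          then have "gf L d * (real (l2 choose m2) * real ((L - l2) choose (d - m2))) \<le> gf l2 m2 * real (L choose d)"
            by (intro S_zeros) (use zer' lt2 c2 ml dL in auto)
          then show ?thesis by (intro fin2 sw2)
        qed
      qed
    qed
  qed
  then show ?thesis by (simp add: l_def m_def g_def CL_def)
qed


lemma claim:
  "hom r l \<Longrightarrow> l \<le> L \<Longrightarrow> mu r \<le> d \<Longrightarrow> l - mu r \<le> L - d \<Longrightarrow> d \<le> L \<Longrightarrow> heavy L d l (mu r) \<Longrightarrow>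
   real (card (Amin r)) * real ((L - l) choose (d - mu r)) * gf L d \<le> real (leaves r) * real (L choose d)"
proof (induction r arbitrary: l L d)
  case Eps
  have l0: "l = 0" using Eps.prems(1) by (simp add: hom_def)
  have A: "Amin Eps = {[]}" by (auto simp: Amin_def ones_def)
  have "d = 0 \<or> d = L" using Eps.prems l0 by (auto simp: heavy_def)
  then have "min d (L - d) = 0" by auto
  then have "gf L d = 1" by (simp add: gf_def)
  then show ?case using A l0 by simp
next
  case (Lit b)
  have l1: "l = 1" using Lit.prems(1) by (simp add: hom_def)
  have A: "Amin (Lit b) = {[b]}" by (auto simp: Amin_def ones_def)
  show ?case
  proof (cases b)
    case True
    then have mu1: "mu (Lit b) = 1" by simp
    have d1: "d \<ge> 1" using Lit.prems(3) mu1 by simp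
    have "d = L \<or> (2 * d \<le> L \<and> d \<le> 2)" using Lit.prems(5) Lit.prems(6) mu1 l1 by (auto simp: heavy_def)
    then show ?thesis
    proof
      assume "d = L"
      then have "gf L d = 1" by (simp add: gf_def)
      then show ?thesis using A l1 mu1 \<open>d = L\<close> by simp
    next
      assume h: "2 * d \<le> L \<and> d \<le> 2"
      then have "d \<le> L - d" by linarith
      then have "min d (L - d) = d" by (simp add: min_def)
      then have g: "gf L d = real L / real d" using d1 h by (intro gf_small) auto
      have key: "d * (L choose d) = L * ((L - 1) choose (d - 1))"
        using d1 by (intro times_binomial_minus1_eq) simp
      then have "real d * real (L choose d) = real L * real ((L - 1) choose (d - 1))"
        by (metis of_nat_mult)
      then have "real ((L - 1) choose (d - 1)) * (real L / real d) = real (L choose d)"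
        using d1 by (simp add: field_simps)
      then show ?thesis using A l1 mu1 g by simp
    qed
  next
    case False
    then have mu0: "mu (Lit b) = 0" by simp
    have "d = 0 \<or> (L \<le> 2 * d \<and> L - d \<le> 2)" using Lit.prems(5) Lit.prems(6) mu0 l1 by (auto simp: heavy_def)
    then show ?thesis
    proof
      assume "d = 0"
      then have "gf L d = 1" by (simp add: gf_def)
      then show ?thesis using A l1 mu0 \<open>d = 0\<close> by simp
    next
      assume h: "L \<le> 2 * d \<and> L - d \<le> 2"
      have z1: "L - d \<ge> 1" using Lit.prems(4) mu0 l1 by simp
      have "L - d \<le> d" using h by linarith
      then have "min d (L - d) = L - d" by (simp add: min_def)
      then have g: "gf L d = real L / real (L - d)" using z1 h by (intro gf_small) auto
      have key: "(L - d) * (L choose d) = L * ((L - 1) choose d)" by (rule binomial_absorb_comp)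
      then have "real (L - d) * real (L choose d) = real L * real ((L - 1) choose d)"
        by (metis of_nat_mult)
      then have "real ((L - 1) choose d) * (real L / real (L - d)) = real (L choose d)"
        using z1 by (simp add: field_simps)
      then show ?thesis using A l1 mu0 g by simp
    qed
  qed
next
  case (Union r s)
  have hr: "hom r l" and hs: "hom s l" using hom_union[OF Union.prems(1)] by auto
  have g0: "gf L d \<ge> 0" by (rule gf_nonneg)
  show ?case
  proof (cases "mu r < mu s")
    case True
    then have m: "mu (Union r s) = mu r" by simp
    have "real (card (Amin r)) * real ((L - l) choose (d - mu r)) * gf L d \<le> real (leaves r) * real (L choose d)"
      using Union.IH(1)[OF hr] Union.prems m by simp
    also have "\<dots> \<le> real (leaves (Union r s)) * real (L choose d)" by (intro mult_right_mono) auto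
    finally show ?thesis using Amin_union_lt[OF True] m by simp
  next
    case nlt: False
    show ?thesis
    proof (cases "mu s < mu r")
      case True
      then have m: "mu (Union r s) = mu s" by simp
      have "real (card (Amin s)) * real ((L - l) choose (d - mu s)) * gf L d \<le> real (leaves s) * real (L choose d)"
        using Union.IH(2)[OF hs] Union.prems m by simp
      also have "\<dots> \<le> real (leaves (Union r s)) * real (L choose d)" by (intro mult_right_mono) auto
      finally show ?thesis using Amin_union_gt[OF True] m by simp
    next
      case False
      then have eq: "mu r = mu s" using nlt by simp
      then have m: "mu (Union r s) = mu r" "mu (Union r s) = mu s" by auto
      have i1: "real (card (Amin r)) * real ((L - l) choose (d - mu r)) * gf L d \<le> real (leaves r) * real (L choose d)"
        using Union.IH(1)[OF hr] Union.prems m by simp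
      have i2: "real (card (Amin s)) * real ((L - l) choose (d - mu s)) * gf L d \<le> real (leaves s) * real (L choose d)"
        using Union.IH(2)[OF hs] Union.prems m by simp
      have "real (card (Amin (Union r s))) \<le> real (card (Amin r)) + real (card (Amin s))"
        using Amin_union_eq[OF eq] by linarith
      then have "real (card (Amin (Union r s))) * real ((L - l) choose (d - mu r)) * gf L d
          \<le> (real (card (Amin r)) + real (card (Amin s))) * real ((L - l) choose (d - mu r)) * gf L d"
        using g0 by (intro mult_right_mono) auto
      also have "\<dots> \<le> real (leaves r) * real (L choose d) + real (leaves s) * real (L choose d)"
        using i1 i2 eq by (simp add: algebra_simps)
      finally show ?thesis using m by (simp add: algebra_simps)
    qed
  qed
next
  case (Concat r s)
  obtain l1 l2 where hr: "hom r l1" and hs: "hom s l2" and ll: "l = l1 + l2"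
    using hom_concat[OF Concat.prems(1)] by blast
  have m: "mu (Concat r s) = mu r + mu s" by simp
  have ml: "mu r \<le> l1" "mu s \<le> l2" using hom_mu_le hr hs by auto
  have "real (card (Amin (Concat r s))) * real ((L - (l1 + l2)) choose (d - (mu r + mu s))) * gf L d
      \<le> (real (leaves r) + real (leaves s)) * real (L choose d)"
  proof (rule claim_concat_core[where ?A1.0 = "real (card (Amin r))" and ?A2.0 = "real (card (Amin s))"])
    show "l1 + l2 \<le> L" using Concat.prems ll by simp
    show "mu r + mu s \<le> d" using Concat.prems m by simp
    show "d \<le> L" using Concat.prems by simp
    show "mu r \<le> l1" "mu s \<le> l2" by (rule ml)+
    show "l1 + l2 - (mu r + mu s) \<le> L - d" using Concat.prems ll m by simp
    show "heavy L d (l1 + l2) (mu r + mu s)" using Concat.prems ll m by simp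
    show "real (card (Amin (Concat r s))) \<le> real (card (Amin r)) * real (card (Amin s))"
      using Amin_concat[of r s] by (metis of_nat_le_iff of_nat_mult)
    show "real (card (Amin r)) \<le> real (l1 choose mu r)" using card_Amin_le[OF hr] by simp
    show "real (card (Amin s)) \<le> real (l2 choose mu s)" using card_Amin_le[OF hs] by simp
    show "real (card (Amin (Concat r s))) \<ge> 0" "real (card (Amin r)) \<ge> 0" "real (card (Amin s)) \<ge> 0" by simp_all
    show "real (leaves r) \<ge> 0" "real (leaves s) \<ge> 0" by simp_all
    show "\<And>L' d'. l1 \<le> L' \<Longrightarrow> mu r \<le> d' \<Longrightarrow> l1 - mu r \<le> L' - d' \<Longrightarrow> d' \<le> L' \<Longrightarrow> heavy L' d' l1 (mu r) \<Longrightarrow>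
         real (card (Amin r)) * real ((L' - l1) choose (d' - mu r)) * gf L' d' \<le> real (leaves r) * real (L' choose d')"
      using Concat.IH(1)[OF hr] by blast
    show "\<And>L' d'. l2 \<le> L' \<Longrightarrow> mu s \<le> d' \<Longrightarrow> l2 - mu s \<le> L' - d' \<Longrightarrow> d' \<le> L' \<Longrightarrow> heavy L' d' l2 (mu s) \<Longrightarrow>
         real (card (Amin s)) * real ((L' - l2) choose (d' - mu s)) * gf L' d' \<le> real (leaves s) * real (L' choose d')"
      using Concat.IH(2)[OF hs] by blast
  qed
  then show ?case using ll m by simp
qed


fun wr :: "bool list \<Rightarrow> rexp" where
  "wr [] = Eps"
| "wr (x # xs) = Concat (Lit x) (wr xs)"

lemma wr_lang: "lang (wr w) = {w}"
  by (induction w) auto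

lemma exists_rexp: "finite S \<Longrightarrow> S \<noteq> {} \<Longrightarrow> \<exists>r. lang r = S"
proof (induction S rule: finite_ne_induct)
  case (singleton x)
  then show ?case using wr_lang by blast
next
  case (insert x F)
  then obtain r where "lang r = F" by blast
  then have "lang (Union (wr x) r) = insert x F" using wr_lang by auto
  then show ?case by blast
qed

lemma T_finite: "finite (threshold_lang n k)"
proof -
  have "threshold_lang n k \<subseteq> {w. set w \<subseteq> UNIV \<and> length w = n}" by (auto simp: threshold_lang_def)
  moreover have "finite {w::bool list. set w \<subseteq> UNIV \<and> length w = n}"
    by (rule finite_lists_length_eq) simp
  ultimately show ?thesis by (rule finite_subset)
qed

definition w0 :: "nat \<Rightarrow> nat \<Rightarrow> bool list" where
  "w0 n k = replicate k True @ replicate (n - k) False"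

lemma w0_props: "k \<le> n \<Longrightarrow> length (w0 n k) = n \<and> ones (w0 n k) = k"
  by (simp add: w0_def ones_def)

lemma T_ne: "k \<le> n \<Longrightarrow> w0 n k \<in> threshold_lang n k"
  using w0_props by (simp add: threshold_lang_def)

lemma rpn_attained:
  assumes "k \<le> n"
  shows "\<exists>r. lang r = threshold_lang n k \<and> nodes r = rpn (threshold_lang n k)"
proof -
  obtain r where r: "lang r = threshold_lang n k"
    using exists_rexp[OF T_finite] T_ne[OF assms] by blast
  have "\<exists>m. \<exists>r. lang r = threshold_lang n k \<and> nodes r = m" using r by blast
  then have "\<exists>r. lang r = threshold_lang n k \<and> nodes r = (LEAST m. \<exists>r. lang r = threshold_lang n k \<and> nodes r = m)"
    by (rule LeastI_ex)
  then show ?thesis by (simp add: rpn_def)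
qed

lemma main_bound:
  assumes k1: "1 \<le> k" and kn: "2 * k \<le> n" and r: "lang r = threshold_lang n k"
  shows "real (leaves r) \<ge> real n * G k / real k" "leaves r \<ge> n"
proof -
  have knle: "k \<le> n" using kn by simp
  have hr: "hom r n" using r by (simp add: hom_def threshold_lang_def)
  have w0in: "w0 n k \<in> lang r" using r T_ne[OF knle] by simp
  have mu_k: "mu r = k"
  proof -
    have "mu r \<le> k" using mu_le[OF w0in] w0_props[OF knle] by simp
    moreover obtain w where "w \<in> lang r" "ones w = mu r" using mu_ex by blast
    then have "k \<le> mu r" using r by (simp add: threshold_lang_def)
    ultimately show ?thesis by simp
  qed
  have A: "Amin r = E n k"
  proof -
    have "Amin r = {w \<in> threshold_lang n k. ones w = k}" using r mu_k by (simp add: Amin_def)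
    also have "\<dots> = E n k" by (auto simp: E_def threshold_lang_def)
    finally show ?thesis .
  qed
  have cA: "card (Amin r) = n choose k" using A card_E by simp
  have "real (card (Amin r)) * real ((n - n) choose (k - mu r)) * gf n k \<le> real (leaves r) * real (n choose k)"
  proof (rule claim[OF hr])
    show "n \<le> n" by simp
    show "mu r \<le> k" using mu_k by simp
    show "n - mu r \<le> n - k" using mu_k by simp
    show "k \<le> n" by (rule knle)
    show "heavy n k n (mu r)" unfolding heavy_def using mu_k kn by simp
  qed
  then have "real (n choose k) * gf n k \<le> real (n choose k) * real (leaves r)"
    using cA mu_k by (simp add: ac_simps)
  moreover have "real (n choose k) > 0" using knle by simp
  ultimately have gl: "gf n k \<le> real (leaves r)" by (simp add: mult_le_cancel_left_pos)
  have "min k (n - k) = k" using kn by (simp add: min_def)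
  then have "gf n k = real n * G k / real k" using k1 by (simp add: gf_def)
  then show "real (leaves r) \<ge> real n * G k / real k" using gl by simp
  show "leaves r \<ge> n" using leaves_length[OF w0in] w0_props[OF knle] by simp
qed

lemma poly_ineq:
  fixes x :: real
  assumes "x \<ge> 200"
  shows "(x - 24)^2 / 48 - 1 - (x + 1) \<ge> (x + 1)^2 / 1000000"
proof -
  define y where "y = x - 24"
  have y: "y \<ge> 176" using assms by (simp add: y_def)
  have x1: "x + 1 \<le> 2 * y" using assms by (simp add: y_def)
  have "(x+1)^2 \<le> (2*y)^2" using x1 assms by (intro power_mono) auto
  then have q: "(x + 1)^2 / 1000000 \<le> 4 * y^2 / 1000000" by (simp add: power_mult_distrib)
  have yy: "y^2 \<ge> 176 * y" using y by (simp add: power2_eq_square)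
  have "4 * y^2 / 1000000 \<le> y^2 / 48 - 1 - (y + 25)"
  proof -
    have "y^2 * (1/48 - 4/1000000) \<ge> 176 * y * (1/48 - 4/1000000)"
      using yy by (intro mult_right_mono) auto
    moreover have "176 * y * (1/48 - 4/1000000) \<ge> y + 26" using y by simp
    ultimately show ?thesis by (simp add: algebra_simps)
  qed
  moreover have "y^2 / 48 - 1 - (y + 25) = (x - 24)^2 / 48 - 1 - (x + 1)" by (simp add: y_def)
  ultimately show ?thesis using q by linarith
qed

theorem corollary8p2:
  shows "\<exists>c::real. c > 0 \<and> (\<forall>n k::nat. 2 * k \<le> n \<longrightarrow>
           real (rpn (threshold_lang n k)) \<ge> real n * (real k) powr (c * log 2 (real k)))"
proof (intro exI[of _ "1/1000000"] conjI allI impI)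
  show "(1/1000000::real) > 0" by simp
  fix n k :: nat
  assume kn: "2 * k \<le> n"
  define c :: real where "c = 1/1000000"
  show "real (rpn (threshold_lang n k)) \<ge> real n * (real k) powr (1/1000000 * log 2 (real k))"
  proof (cases "k = 0")
    case True
    then show ?thesis by simp
  next
    case False
    then have k1: "1 \<le> k" by simp
    have n2: "n \<ge> 2" using kn k1 by simp
    obtain r where r: "lang r = threshold_lang n k" and rn: "nodes r = rpn (threshold_lang n k)"
      using rpn_attained[of k n] kn by auto
    have lb1: "real (leaves r) \<ge> real n * G k / real k" and lb2: "leaves r \<ge> n"
      using main_bound[OF k1 kn r] by auto
    have nl: "real (nodes r) + 1 = 2 * real (leaves r)"
      using nodes_leaves[of r] by (metis of_nat_1 of_nat_add of_nat_mult of_nat_numeral)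
    define Lk where "Lk = log 2 (real k)"
    have kpos: "real k > 0" using k1 by simp
    have pw: "real k powr (c * Lk) = 2 powr (c * Lk^2)"
    proof -
      have "real k = 2 powr Lk" using kpos by (simp add: Lk_def)
      then have "real k powr (c * Lk) = (2 powr Lk) powr (c * Lk)" by simp
      also have "\<dots> = 2 powr (c * Lk^2)" by (simp add: powr_powr power2_eq_square ac_simps)
      finally show ?thesis .
    qed
    define lam where "lam = floor_log k"
    have p1: "2^lam \<le> k" using floor_log_exp2_le[of k] k1 by (simp add: lam_def)
    have p2: "k < 2 * 2^lam" using floor_log_exp2_gt[of k] by (simp add: lam_def)
    have Lk0: "Lk \<ge> real lam"
    proof -
      have "real (2^lam) \<le> real k" using p1 by (simp only: of_nat_le_iff)
      then have "log 2 (2^lam) \<le> Lk" unfolding Lk_def using kpos by (subst log_le_cancel_iff) auto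
      then show ?thesis by simp
    qed
    have Lk1: "Lk < real lam + 1"
    proof -
      have "real k < real (2 * 2^lam)" using p2 by (simp only: of_nat_less_iff)
      then have "real k < 2 powr (real lam + 1)"
        by (simp add: powr_add powr_realpow)
      then show ?thesis unfolding Lk_def using kpos by (simp add: log_less_iff)
    qed
    have Lkn: "Lk \<ge> 0" using Lk0 by simp
    show ?thesis
    proof (cases "lam < 200")
      case True
      have "Lk^2 \<le> 200^2" using Lk1 True Lkn by (intro power_mono) auto
      then have "c * Lk^2 \<le> 1/2" by (simp add: c_def)
      then have "2 powr (c * Lk^2) \<le> 2 powr (1/2)" by simp
      also have "2 powr (1/2::real) = sqrt 2" by (simp add: powr_half_sqrt)
      also have "sqrt 2 \<le> (3/2::real)"
        by (rule real_le_lsqrt) (auto simp: power2_eq_square)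
      finally have hh: "2 powr (c * Lk^2) \<le> 3/2" .
      have "real n * (real k) powr (c * Lk) \<le> real n * (3/2)"
        using pw hh by (intro mult_left_mono) auto
      also have "\<dots> \<le> 2 * real n - 1" using n2 by simp
      also have "\<dots> \<le> real (nodes r)" using nl lb2 by linarith
      finally show ?thesis using rn by (simp add: c_def Lk_def)
    next
      case False
      then have l200: "real lam \<ge> 200" by simp
      define Ex where "Ex = ((lam - 24)^2) div 48"
      have Gk: "G k = 2 powr real Ex" by (simp add: G_def Ex_def lam_def powr_realpow)
      have Exlb: "real Ex \<ge> (real lam - 24)^2 / 48 - 1"
      proof -
        define x where "x = (lam - 24)^2"
        have m1: "x mod 48 < 48" by simp
        have m2: "48 * (x div 48) + x mod 48 = x" by (rule mult_div_mod_eq)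
        have m3: "48 * (x div 48 + 1) = 48 * (x div 48) + 48" by simp
        have "x < 48 * (Ex + 1)" using m1 m2 m3 unfolding Ex_def x_def[symmetric] by linarith
        then have "real x < real (48 * (Ex + 1))" by (simp only: of_nat_less_iff)
        then have xx: "real x < 48 * (real Ex + 1)" by simp
        have d24: "real (lam - 24) = real lam - 24" using l200 by (simp add: of_nat_diff)
        have "real x = (real lam - 24)^2" unfolding x_def using d24 by (simp only: of_nat_power)
        then show ?thesis using xx by simp
      qed
      have kup: "real k \<le> 2 powr (real lam + 1)"
      proof -
        have "real k < real (2 * 2^lam)" using p2 by (simp only: of_nat_less_iff)
        then show ?thesis by (simp add: powr_add powr_realpow)
      qed
      have "G k / real k \<ge> 2 powr real Ex / 2 powr (real lam + 1)"
        unfolding Gk by (rule divide_left_mono) (use kup kpos in auto)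
      also have "2 powr real Ex / 2 powr (real lam + 1) = 2 powr (real Ex - (real lam + 1))"
        by (simp add: powr_diff)
      finally have g1: "G k / real k \<ge> 2 powr (real Ex - (real lam + 1))" .
      have "c * Lk^2 \<le> c * (real lam + 1)^2"
        using Lk1 Lkn by (intro mult_left_mono power_mono) (auto simp: c_def)
      also have "\<dots> \<le> real Ex - (real lam + 1)"
        using poly_ineq[OF l200] Exlb by (simp add: c_def)
      finally have "2 powr (c * Lk^2) \<le> 2 powr (real Ex - (real lam + 1))" by simp
      then have "real k powr (c * Lk) \<le> G k / real k" using pw g1 by linarith
      then have "real n * (real k) powr (c * Lk) \<le> real n * (G k / real k)"
        by (intro mult_left_mono) auto
      also have "\<dots> = real n * G k / real k" by simp
      also have "\<dots> \<le> real (leaves r)" by (rule lb1)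
      also have "\<dots> \<le> real (nodes r)" using nl lb2 n2 by linarith
      finally show ?thesis using rn by (simp add: c_def Lk_def)
    qed
  qed
qed


end
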